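(* Let $R$ be a commutative ring with $\operatorname{char}(R)=p>0$ and $A=R[\sigma]/(\sigma^n-1)$ with $n=mp$. If $p\ne2$, or $p=2$ and $m$ is even, then as graded algebras $$HH^*(A;A)\cong R[x,y,z]/(x^n-1,\,y^2).$$ If $p=2$ and $m$ is odd, then $$HH^*(A;A)\cong R[x,y,z]/(x^n-1,\,y^2-x^{n-2}z).$$ Here $x\in HH^0(A;A)$ is the class of $\sigma$, and $y\in HH^1(A;A)$, $z\in HH^2(A;A)$ are the classes of $1\in A$ under the identifications $HH^{2k+1}(A;A)=\operatorname{Ann}_A(n\sigma^{n-1})$ and $HH^{2k}(A;A)=A/(n\sigma^{n-1}A)$ ($k\ge1$); $|x|=0,|y|=1,|z|=2$.
   Context: The identifications come from the $2$-periodic $A^e$-projective resolution $\cdots\to A\otimes A\xrightarrow{d_2}A\otimes A\xrightarrow{d_1}A\otimes A\to A$, $d_{\text{odd}}$ = multiplication by $1\otimes\sigma-\sigma\otimes1$, $d_{\text{even}}$ = multiplication by $\sum_{i=0}^{n-1}\sigma^i\otimes\sigma^{n-i-1}$, whose $\operatorname{Hom}_{A^e}(-,A)$ complex is $A\xrightarrow{0}A\xrightarrow{n\sigma^{n-1}}A\xrightarrow{0}\cdots$. The product is the Hochschild cup product. *)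

theory Defs
  imports "HOL-Computational_Algebra.Polynomial" "HOL-Computational_Algebra.Primes"
begin

text \<open>Elements of A are represented by polynomials over R of degree < n
  (the normal forms modulo sigma^n - 1); red n reduces a polynomial
  modulo sigma^n - 1.\<close>

definition red :: "nat \<Rightarrow> 'a::comm_ring_1 poly \<Rightarrow> 'a poly" where
  "red n p = (\<Sum>i\<le>degree p. monom (coeff p i) (i mod n))"

definition Acar :: "nat \<Rightarrow> 'a::comm_ring_1 poly set" where
  "Acar n = {p. \<forall>i\<ge>n. coeff p i = 0}"

definition sig :: "nat \<Rightarrow> nat \<Rightarrow> 'a::comm_ring_1 poly" where
  "sig n i = monom 1 (i mod n)"

text \<open>Since A is R-free
  with basis sigma^0,...,sigma^(n-1), such a map is the same as its values on the
  basis tensors sigma^{i_1} \<otimes> ... \<otimes> sigma^{i_k}; we represent a k-cochain as a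
  function on index lists [i_1,...,i_k] (entries < n), extended by 0 elsewhere.\<close>

definition idx :: "nat \<Rightarrow> nat \<Rightarrow> nat list set" where
  "idx n k = {is. length is = k \<and> set is \<subseteq> {..<n}}"

definition cochains :: "nat \<Rightarrow> nat \<Rightarrow> (nat list \<Rightarrow> 'a::comm_ring_1 poly) set" where
  "cochains n k = {f. (\<forall>is. f is \<in> Acar n) \<and> (\<forall>is. is \<notin> idx n k \<longrightarrow> f is = 0)}"

text \<open>merge j is replaces the entries j-1 and j (0-based) by the index of their
  product sigma^{i_{j}} sigma^{i_{j+1}} = sigma^{(i_j + i_{j+1}) mod n}.\<close>
definition merge :: "nat \<Rightarrow> nat \<Rightarrow> nat list \<Rightarrow> nat list" where
  "merge n j is = take (j - 1) is @ [(is ! (j - 1) + is ! j) mod n] @ drop (j + 1) is"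

definition hoch_d :: "nat \<Rightarrow> nat \<Rightarrow> (nat list \<Rightarrow> 'a::comm_ring_1 poly) \<Rightarrow> nat list \<Rightarrow> 'a poly" where
  "hoch_d n k f is =
     (if is \<in> idx n (Suc k) then
        red n (sig n (hd is) * f (tl is))
        + (\<Sum>j\<in>{1..k}. (- 1) ^ j * f (merge n j is))
        + (- 1) ^ (Suc k) * red n (f (butlast is) * sig n (last is))
      else 0)"

definition cocycles :: "nat \<Rightarrow> nat \<Rightarrow> (nat list \<Rightarrow> 'a::comm_ring_1 poly) set" where
  "cocycles n k = {f \<in> cochains n k. hoch_d n k f = (\<lambda>_. 0)}"

definition coboundaries :: "nat \<Rightarrow> nat \<Rightarrow> (nat list \<Rightarrow> 'a::comm_ring_1 poly) set" where
  "coboundaries n k = (if k = 0 then {\<lambda>_. 0} else hoch_d n (k - 1) ` cochains n (k - 1))"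

definition cohom :: "nat \<Rightarrow> nat \<Rightarrow> (nat list \<Rightarrow> 'a::comm_ring_1 poly) \<Rightarrow> (nat list \<Rightarrow> 'a poly) \<Rightarrow> bool" where
  "cohom n k f g \<longleftrightarrow> (\<lambda>is. f is - g is) \<in> coboundaries n k"

definition cup :: "nat \<Rightarrow> nat \<Rightarrow> nat \<Rightarrow> (nat list \<Rightarrow> 'a::comm_ring_1 poly) \<Rightarrow> (nat list \<Rightarrow> 'a poly) \<Rightarrow> nat list \<Rightarrow> 'a poly" where
  "cup n k l f g is = (if is \<in> idx n (k + l) then red n (f (take k is) * g (drop k is)) else 0)"

definition csmult :: "'a::comm_ring_1 \<Rightarrow> (nat list \<Rightarrow> 'a poly) \<Rightarrow> nat list \<Rightarrow> 'a poly" where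
  "csmult c f is = smult c (f is)"

definition csum :: "nat set \<Rightarrow> (nat \<Rightarrow> nat list \<Rightarrow> 'a::comm_ring_1 poly) \<Rightarrow> nat list \<Rightarrow> 'a poly" where
  "csum I F is = (\<Sum>i\<in>I. F i is)"

definition cone :: "nat list \<Rightarrow> 'a::comm_ring_1 poly" where
  "cone is = (if is = [] then 1 else 0)"

fun cpow :: "nat \<Rightarrow> nat \<Rightarrow> (nat list \<Rightarrow> 'a::comm_ring_1 poly) \<Rightarrow> nat \<Rightarrow> nat list \<Rightarrow> 'a poly" where
  "cpow n d f 0 = cone"
| "cpow n d f (Suc k) = cup n d (d * k) f (cpow n d f k)"

definition gx :: "nat \<Rightarrow> nat list \<Rightarrow> 'a::comm_ring_1 poly" where
  "gx n is = (if is = [] then sig n 1 else 0)"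

text \<open>y: the class in HH^1 corresponding to 1 \<in> Ann_A(n sigma^(n-1)) under the
  comparison with the 2-periodic resolution; as a derivation it is d/d sigma,
  sigma^i \<mapsto> i sigma^(i-1).\<close>
definition gy :: "nat \<Rightarrow> nat list \<Rightarrow> 'a::comm_ring_1 poly" where
  "gy n is = (if is \<in> idx n 1 then of_nat (hd is) * sig n (hd is + n - 1) else 0)"

text \<open>z: the class in HH^2 corresponding to 1 \<in> A/(n sigma^(n-1) A) under the
  comparison with the 2-periodic resolution; it is the "carry" cocycle
  (sigma^i, sigma^j) \<mapsto> [i + j \<ge> n] sigma^(i+j) for 0 \<le> i, j < n.\<close>
definition gz :: "nat \<Rightarrow> nat list \<Rightarrow> 'a::comm_ring_1 poly" where
  "gz n is = (if is \<in> idx n 2 \<and> n \<le> is ! 0 + is ! 1 then sig n (is ! 0 + is ! 1) else 0)"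

definition mono :: "nat \<Rightarrow> nat \<Rightarrow> nat \<Rightarrow> nat \<Rightarrow> nat list \<Rightarrow> 'a::comm_ring_1 poly" where
  "mono n i e k = cup n 0 (e + 2 * k) (cpow n 0 (gx n) i)
                     (cup n e (2 * k) (cpow n 1 (gy n) e) (cpow n 2 (gz n) k))"

end

theory Submission
  imports Defs
begin


definition del :: "nat \<Rightarrow> 'x list \<Rightarrow> 'x list" where
  "del i xs = take i xs @ drop (Suc i) xs"

lemma del_0_Cons[simp]: "del 0 (a # xs) = xs" by (simp add: del_def)
lemma del_Suc_Cons[simp]: "del (Suc i) (a # xs) = a # del i xs" by (simp add: del_def)
lemma length_del[simp]: "i < length xs \<Longrightarrow> length (del i xs) = length xs - 1"
  by (simp add: del_def)
lemma del_map: "del i (map f xs) = map f (del i xs)"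
  by (simp add: del_def take_map drop_map)

definition cob :: "(nat list \<Rightarrow> 'b::comm_ring_1) \<Rightarrow> nat list \<Rightarrow> 'b" where
  "cob F x = (\<Sum>i<length x. (-1)^i * F (del i x))"

definition ss :: "(nat list \<Rightarrow> 'b) \<Rightarrow> nat list \<Rightarrow> 'b" where
  "ss F x = F (0 # x)"

lemma ss_cob: "ss (cob F) x = F x - cob (ss F) x"
proof -
  have "ss (cob F) x = (\<Sum>i<Suc (length x). (-1)^i * F (del i (0#x)))"
    by (simp add: ss_def cob_def)
  also have "\<dots> = F x + (\<Sum>i<length x. (-1)^(Suc i) * F (del (Suc i) (0#x)))"
    by (subst sum.lessThan_Suc_shift) simp
  also have "\<dots> = F x - cob (ss F) x"
    by (simp add: cob_def ss_def sum_negf)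
  finally show ?thesis .
qed

lemma cob_Cons: "cob G (a # x) = G x - cob (\<lambda>y. G (a # y)) x"
proof -
  have "cob G (a#x) = (\<Sum>i<Suc (length x). (-1)^i * G (del i (a#x)))"
    by (simp add: cob_def)
  also have "\<dots> = G x + (\<Sum>i<length x. (-1)^(Suc i) * G (del (Suc i) (a#x)))"
    by (subst sum.lessThan_Suc_shift) simp
  also have "\<dots> = G x - cob (\<lambda>y. G (a # y)) x"
    by (simp add: cob_def sum_negf)
  finally show ?thesis .
qed

lemma cob_Nil[simp]: "cob G [] = 0" by (simp add: cob_def)

lemma cob_cob: "cob (cob F) x = 0"
proof (induction x arbitrary: F)
  case Nil then show ?case by (simp add: cob_def)
next
  case (Cons a x)
  have e: "(\<lambda>y. cob F (a # y)) = (\<lambda>y. F y - cob (\<lambda>y. F (a # y)) y)"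
    by (simp add: cob_Cons)
  have lin: "cob (\<lambda>y. G y - H y) x = cob G x - cob H x" for G H :: "nat list \<Rightarrow> 'a"
    by (simp add: cob_def algebra_simps sum_subtractf)
  show ?case
    by (simp add: cob_Cons[of "cob F"] e lin Cons.IH)
qed

lemma nat_mod_add_cancel:
  fixes i j g n :: nat
  assumes "(i + g) mod n = (j + g) mod n"
  shows "i mod n = j mod n"
proof -
  have "int ((i + g) mod n) = int ((j + g) mod n)" using assms by simp
  then have "(int i + int g) mod int n = (int j + int g) mod int n" by (simp add: zmod_int)
  then have "int n dvd (int i + int g) - (int j + int g)" by (simp add: mod_eq_dvd_iff)
  then have "int n dvd int i - int j" by simp
  then have "int i mod int n = int j mod int n" by (simp add: mod_eq_dvd_iff)
  then show ?thesis by (metis of_nat_eq_iff zmod_int)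
qed

lemma sum_shift_mod:
  fixes f :: "nat \<Rightarrow> 'b::comm_monoid_add"
  assumes "0 < n"
  shows "(\<Sum>i<n. f ((i + g) mod n)) = (\<Sum>i<n. f i)"
proof -
  have inj: "inj_on (\<lambda>i. (i + g) mod n) {..<n}"
  proof (rule inj_onI)
    fix i j assume i: "i \<in> {..<n}" and j: "j \<in> {..<n}" and e: "(i + g) mod n = (j + g) mod n"
    have "i mod n = j mod n" by (rule nat_mod_add_cancel[OF e])
    with i j show "i = j" by simp
  qed
  have im: "(\<lambda>i. (i + g) mod n) ` {..<n} = {..<n}"
    using inj assms by (intro endo_inj_surj) auto
  have "(\<Sum>i<n. f ((i + g) mod n)) = sum f ((\<lambda>i. (i + g) mod n) ` {..<n})"
    using sum.reindex[OF inj, of f] by simp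
  then show ?thesis using im by simp
qed

lemma cob_cong_len:
  assumes "\<And>y. Suc (length y) = length x \<Longrightarrow> F y = G y"
  shows "cob F x = cob G x"
  unfolding cob_def by (rule sum.cong) (auto intro!: arg_cong[where f="\<lambda>t. _ * t"] assms)

lemma cob_scal: "cob (\<lambda>y. c * F y) x = c * cob F x"
  by (simp add: cob_def sum_distrib_left algebra_simps)

lemma cob_diff: "cob (\<lambda>y. F y - G y) x = cob F x - cob G x"
  by (simp add: cob_def algebra_simps sum_subtractf)

lemma cob_of_int: "cob (\<lambda>y. of_int (F y)) x = of_int (cob F x)"
  by (simp add: cob_def)

lemma cob_if: "cob (\<lambda>y. if P then F y else 0) x = (if P then cob F x else 0)"
  by (simp add: cob_def)

locale cyc =
  fixes n :: nat
  assumes n2: "2 \<le> n"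
begin

lemma npos: "0 < n" using n2 by simp

definition act :: "nat \<Rightarrow> nat list \<Rightarrow> nat list" where
  "act g x = map (\<lambda>v. (v + g) mod n) x"

definition gact :: "nat \<Rightarrow> (nat list \<Rightarrow> 'b) \<Rightarrow> nat list \<Rightarrow> 'b" where
  "gact g F x = F (act g x)"

definition nrm :: "(nat list \<Rightarrow> 'b) \<Rightarrow> bool" where
  "nrm F \<longleftrightarrow> (\<forall>x. F (map (\<lambda>v. v mod n) x) = F x)"

lemma act_act: "act a (act b x) = act (a + b) x"
  by (simp add: act_def mod_add_right_eq add.commute add.left_commute)

lemma act_cong: "a mod n = b mod n \<Longrightarrow> act a x = act b x"
  unfolding act_def by (metis mod_add_right_eq)

lemma act_mod: "act (a mod n) x = act a x"
  by (rule act_cong) simp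

lemma act_0: "act 0 x = map (\<lambda>v. v mod n) x" by (simp add: act_def)

lemma act_map_mod: "act g (map (\<lambda>v. v mod n) x) = act g x"
  by (simp add: act_def mod_add_left_eq)

lemma length_act[simp]: "length (act g x) = length x" by (simp add: act_def)
lemma act_Cons[simp]: "act g (a # x) = (a + g) mod n # act g x" by (simp add: act_def)
lemma act_Nil[simp]: "act g [] = []" by (simp add: act_def)

lemma gact_gact: "gact a (gact b F) = gact (a + b) F"
  by (rule ext) (simp add: gact_def act_act add.commute)

lemma gact_cong: "a mod n = b mod n \<Longrightarrow> gact a F = gact b F"
  by (rule ext) (simp add: gact_def act_cong[of a b])

lemma gact_mod: "gact (a mod n) F = gact a F"
  by (rule gact_cong) simp

lemma del_act: "del i (act g x) = act g (del i x)"
  by (simp add: act_def del_map)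

lemma cob_gact: "cob (gact g F) = gact g (cob F)"
  by (rule ext) (simp add: cob_def gact_def del_act)

lemma nrm_gact: "nrm (gact g F)"
  by (simp add: nrm_def gact_def act_map_mod)

lemma nrm_cob: "nrm F \<Longrightarrow> nrm (cob F)"
  unfolding nrm_def cob_def by (simp add: del_map)

lemma gact_0: "nrm F \<Longrightarrow> gact 0 F = F"
  by (rule ext) (simp add: gact_def act_0 nrm_def)

lemma gact_eq: "gact g F = (\<lambda>x. F (act g x))" by (rule ext) (simp add: gact_def)
lemma ss_eq: "ss F = (\<lambda>x. F (0 # x))" by (rule ext) (simp add: ss_def)

primrec Gam :: "nat \<Rightarrow> (nat list \<Rightarrow> 'b::comm_ring_1) \<Rightarrow> 'b" where
  "Gam 0 F = F [0]"
| "Gam (Suc d) F = (if even d then Gam d (gact 1 (ss F)) - Gam d (ss F)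
                    else (\<Sum>i<n. Gam d (gact i (ss F))))"

lemma Gam_add: "Gam d (\<lambda>x. F x + G x) = Gam d F + Gam d G"
  by (induction d arbitrary: F G) (simp_all add: gact_eq ss_eq sum.distrib)

lemma Gam_minus: "Gam d (\<lambda>x. - F x) = - Gam d F"
  by (induction d arbitrary: F) (simp_all add: gact_eq ss_eq sum_negf)

lemma Gam_diff: "Gam d (\<lambda>x. F x - G x) = Gam d F - Gam d G"
  using Gam_add[of d F "\<lambda>x. - G x"] Gam_minus[of d G] by simp

lemma Gam_multr: "Gam d (\<lambda>x. F x * c) = Gam d F * c"
  by (induction d arbitrary: F) (simp_all add: gact_eq ss_eq sum_distrib_right left_diff_distrib)

lemma Gam_multl: "Gam d (\<lambda>x. c * F x) = c * Gam d F"
proof (induction d arbitrary: F)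
  case 0 then show ?case by simp
next
  case (Suc d)
  show ?case by (simp add: gact_eq ss_eq Suc.IH right_diff_distrib sum_distrib_left)
qed

lemma Gam_zero: "Gam d (\<lambda>x. 0) = 0"
  using Gam_multr[of d "\<lambda>x. 0" 0] by simp

lemma Gam_sum: "finite S \<Longrightarrow> Gam d (\<lambda>x. \<Sum>i\<in>S. F i x) = (\<Sum>i\<in>S. Gam d (F i))"
  by (induction S rule: finite_induct) (simp_all add: Gam_zero Gam_add)

lemma Gam_cong:
  "(\<And>y. length y = Suc d \<Longrightarrow> hd y = 0 \<Longrightarrow> F y = G y) \<Longrightarrow> Gam d F = Gam d G"
proof (induction d arbitrary: F G)
  case 0 then show ?case by simp
next
  case (Suc d)
  have h: "Gam d (gact i (ss F)) = Gam d (gact i (ss G))" for i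
    by (rule Suc.IH) (auto simp: gact_def ss_def intro!: Suc.prems)
  have h2: "Gam d (ss F) = Gam d (ss G)"
    by (rule Suc.IH) (auto simp: ss_def intro!: Suc.prems)
  show ?case by (simp add: h h2)
qed

lemma Gam_gact_mod: "Gam d (gact (h mod n) F) = Gam d (gact h F)"
  by (simp add: gact_mod)

lemma sum_gact_shift: "(\<Sum>i<n. Gam d (gact i (gact g F))) = (\<Sum>i<n. Gam d (gact i F))"
proof -
  have "(\<Sum>i<n. Gam d (gact i (gact g F))) = (\<Sum>i<n. Gam d (gact ((i + g) mod n) F))"
    by (simp add: gact_gact gact_mod add.commute)
  also have "\<dots> = (\<Sum>i<n. Gam d (gact i F))"
    by (rule sum_shift_mod[OF npos])
  finally show ?thesis .
qed

lemma Gam_cob: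
  "Gam (Suc d) (cob F) = (if even d then Gam d (gact 1 F) - Gam d F
                          else (\<Sum>i<n. Gam d (gact i F)))"
proof (induction d arbitrary: F)
  case 0
  have "Gam 0 (gact 1 (cob (ss F))) = Gam 0 (cob (ss F))"
    by (simp add: gact_def cob_def)
  moreover have "Gam 0 (gact 1 (ss (cob F))) = Gam 0 (gact 1 F) - Gam 0 (gact 1 (cob (ss F)))"
    by (simp add: gact_def ss_cob)
  moreover have "Gam 0 (ss (cob F)) = Gam 0 F - Gam 0 (cob (ss F))"
    by (simp add: ss_cob)
  ultimately show ?case by simp
next
  case (Suc d)
  have e1: "gact i (ss (cob F)) = (\<lambda>x. gact i F x - cob (gact i (ss F)) x)" for i
    by (rule ext) (simp add: gact_def ss_cob cob_gact)
  have e0: "ss (cob F) = (\<lambda>x. F x - cob (ss F) x)"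
    by (rule ext) (simp add: ss_cob)
  have sh: "(\<Sum>i<n. Gam d (gact 1 (gact i G))) = (\<Sum>i<n. Gam d (gact i G))" for G
  proof -
    have "gact 1 (gact i G) = gact i (gact 1 G)" for i by (simp add: gact_gact add.commute)
    then show ?thesis by (simp add: sum_gact_shift)
  qed
  show ?case
  proof (cases "even d")
    case True
    have "Gam (Suc (Suc d)) (cob F) = (\<Sum>i<n. Gam (Suc d) (gact i (ss (cob F))))"
      using True by simp
    also have "\<dots> = (\<Sum>i<n. Gam (Suc d) (gact i F) - Gam (Suc d) (cob (gact i (ss F))))"
      by (simp only: e1 Gam_diff)
    also have "\<dots> = (\<Sum>i<n. Gam (Suc d) (gact i F))
        - (\<Sum>i<n. Gam d (gact 1 (gact i (ss F))) - Gam d (gact i (ss F)))"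
      using True by (simp only: Suc.IH if_True sum_subtractf)
    also have "\<dots> = (\<Sum>i<n. Gam (Suc d) (gact i F))"
      by (simp only: sum_subtractf sh) simp
    finally show ?thesis using True by simp
  next
    case False
    have "Gam (Suc (Suc d)) (cob F) = Gam (Suc d) (gact 1 (ss (cob F))) - Gam (Suc d) (ss (cob F))"
      using False by simp
    also have "\<dots> = (Gam (Suc d) (gact 1 F) - Gam (Suc d) (cob (gact 1 (ss F))))
                      - (Gam (Suc d) F - Gam (Suc d) (cob (ss F)))"
      by (simp only: e1[of 1] Gam_diff) (simp only: e0 Gam_diff)
    also have "\<dots> = (Gam (Suc d) (gact 1 F) - (\<Sum>i<n. Gam d (gact i (gact 1 (ss F)))))
                      - (Gam (Suc d) F - (\<Sum>i<n. Gam d (gact i (ss F))))"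
      using False by (simp only: Suc.IH if_False)
    also have "\<dots> = Gam (Suc d) (gact 1 F) - Gam (Suc d) F"
      using sum_gact_shift[of d 1 "ss F"] by simp
    finally show ?thesis using False by simp
  qed
qed


definition dif :: "nat \<Rightarrow> nat \<Rightarrow> nat" where
  "dif a b = nat ((int b - int a) mod int n)"

lemma int_dif: "int (dif a b) = (int b - int a) mod int n"
  using npos by (simp add: dif_def)

lemma dif_lt: "dif a b < n"
proof -
  have "(int b - int a) mod int n < int n" using npos by simp
  then show ?thesis using int_dif[of a b] by linarith
qed

lemma dif_eqI: "int (dif a b) = int (dif c d) \<Longrightarrow> dif a b = dif c d" by simp

lemma dif_mod1[simp]: "dif (a mod n) b = dif a b"
  by (rule dif_eqI) (simp add: int_dif zmod_int mod_diff_right_eq)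

lemma dif_mod2[simp]: "dif a (b mod n) = dif a b"
  by (rule dif_eqI) (simp add: int_dif zmod_int mod_diff_left_eq)

lemma dif_shift: "dif (a + g) (b + g) = dif a b"
  by (rule dif_eqI) (simp add: int_dif)

lemma dif_shift_mod: "dif ((a + g) mod n) ((b + g) mod n) = dif a b"
  by (simp add: dif_shift)

lemma dif_self[simp]: "dif a a = 0"
  by (simp add: dif_def)

lemma dif_add: "(dif a b + dif b c) mod n = dif a c"
proof -
  have "int ((dif a b + dif b c) mod n) = (int (dif a b) + int (dif b c)) mod int n"
    by (simp add: zmod_int)
  also have "\<dots> = ((int b - int a) + (int c - int b)) mod int n"
    by (simp add: int_dif mod_add_eq)
  also have "\<dots> = int (dif a c)" by (simp add: int_dif)
  finally show ?thesis by simp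
qed

lemma dif_0: "dif 0 b = b mod n"
proof -
  have "int (dif 0 b) = int (b mod n)" by (simp add: int_dif zmod_int)
  then show ?thesis by simp
qed

lemma dif_from: "dif a ((a + g) mod n) = g mod n"
proof -
  have "int (dif a ((a + g) mod n)) = int (g mod n)" by (simp add: int_dif zmod_int mod_diff_left_eq)
  then show ?thesis by simp
qed

lemma dif_eq0_iff: "dif a b = 0 \<longleftrightarrow> a mod n = b mod n"
proof -
  have "dif a b = 0 \<longleftrightarrow> (int b - int a) mod int n = 0" using int_dif[of a b] by linarith
  also have "\<dots> \<longleftrightarrow> int b mod int n = int a mod int n" by (simp add: mod_eq_dvd_iff dvd_eq_mod_eq_0[symmetric])
  also have "\<dots> \<longleftrightarrow> a mod n = b mod n" by (metis of_nat_eq_iff zmod_int)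
  finally show ?thesis .
qed

lemma int_mod_aux: "(x mod m + m - y mod m) mod m = (x - y) mod (m::int)"
proof -
  have "(x mod m + m - y mod m) mod m = ((x mod m - y mod m) + m) mod m" by (simp add: algebra_simps)
  also have "\<dots> = (x mod m - y mod m) mod m" by simp
  also have "\<dots> = (x - y) mod m" by (simp add: mod_diff_eq)
  finally show ?thesis .
qed

lemma dif_sub: "dif b h = (dif a h + (n - dif a b)) mod n"
proof -
  have "int ((dif a h + (n - dif a b)) mod n) = (int (dif a h) + int n - int (dif a b)) mod int n"
    using dif_lt[of a b] by (simp add: zmod_int of_nat_diff)
  also have "\<dots> = ((int h - int a) mod int n + int n - (int b - int a) mod int n) mod int n"
    by (simp add: int_dif)
  also have "\<dots> = ((int h - int a) - (int b - int a)) mod int n"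
    by (rule int_mod_aux)
  also have "\<dots> = int (dif b h)" by (simp add: int_dif)
  finally show ?thesis by simp
qed

lemma mod_2n: "x < 2 * n \<Longrightarrow> x mod n = (if x < n then x else x - n)"
  by (simp add: le_mod_geq)

definition car3 :: "nat \<Rightarrow> nat \<Rightarrow> nat \<Rightarrow> int" where
  "car3 a b c = (if n \<le> dif a b + dif b c then 1 else 0)"

lemma carry_cocycle_uvw:
  assumes "u < n" "v < n" "w < n"
  shows "(if n \<le> v + w then 1 else 0) - (if n \<le> (u + v) mod n + w then 1 else 0)
       + (if n \<le> u + (v + w) mod n then 1 else 0) - (if n \<le> u + v then 1 else 0) = (0::int)"
  using assms by (auto simp: mod_2n)

lemma car3_cocycle: "car3 b c d - car3 a c d + car3 a b d - car3 a b c = 0"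
proof -
  have "dif a c = (dif a b + dif b c) mod n" by (simp add: dif_add)
  moreover have "dif b d = (dif b c + dif c d) mod n" by (simp add: dif_add)
  ultimately show ?thesis
    unfolding car3_def using carry_cocycle_uvw[of "dif a b" "dif b c" "dif c d"]
    by (simp add: dif_lt)
qed

lemma cyc_ind:
  assumes "h < n"
  shows "(if dif b h < dif b c then 1 else 0) - (if dif a h < dif a c then 1 else 0)
       + (if dif a h < dif a b then 1 else 0) = car3 a b c"
proof -
  define t u v where "t = dif a h" "u = dif a b" "v = dif b c"
  have tuv: "t < n" "u < n" "v < n" unfolding t_u_v_def by (simp_all add: dif_lt)
  have 1: "dif b h = (t + (n - u)) mod n" unfolding t_u_v_def by (rule dif_sub)
  have 2: "dif a c = (u + v) mod n" unfolding t_u_v_def by (simp add: dif_add)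
  show ?thesis unfolding car3_def 1 2 t_u_v_def[symmetric] using tuv
    by (auto simp: mod_2n)
qed


fun W :: "nat list \<Rightarrow> int" where
  "W (a # b # c # r) = car3 a b c * W (c # r)"
| "W _ = 1"

lemma car3_shift: "car3 ((a + g) mod n) ((b + g) mod n) ((c + g) mod n) = car3 a b c"
  by (simp add: car3_def dif_shift)

lemma car3_mod: "car3 (a mod n) (b mod n) (c mod n) = car3 a b c"
  by (simp add: car3_def)

lemma W_act: "W (act g x) = W x"
  by (induction x rule: W.induct) (simp_all add: car3_shift)

lemma W_map_mod: "W (map (\<lambda>v. v mod n) x) = W x"
  by (induction x rule: W.induct) (simp_all add: car3_mod)

lemma W_cob: "length x = 2 * k + 2 \<Longrightarrow> cob W x = 0"
proof (induction k arbitrary: x)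
  case 0
  then obtain a b where "x = [a, b]"
    by (metis (no_types, lifting) One_nat_def Suc_1 Suc_length_conv add_0 length_0_conv mult_0_right)
  then show ?case by (simp add: cob_Cons)
next
  case (Suc k)
  have "length x = Suc (Suc (Suc (Suc (2 * k))))" using Suc.prems by simp
  then obtain a b c d r where x: "x = a # b # c # d # r" and lr: "length r = 2 * k"
    by (auto simp: length_Suc_conv)
  have ih: "cob W (c # d # r) = 0" using Suc.IH lr by simp
  then have 1: "cob (\<lambda>y. W (c # y)) (d # r) = W (d # r)" by (simp add: cob_Cons)
  have 2: "cob (\<lambda>y. W (a # b # c # y)) (d # r) = car3 a b c * W (d # r)"
    using 1 by (simp add: cob_scal)
  have e: "car3 a b d + car3 b c d = car3 a b c + car3 a c d" using car3_cocycle[of b c d a] by simp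
  have "W (d # r) * car3 a b d + W (d # r) * car3 b c d = W (d # r) * car3 a b c + W (d # r) * car3 a c d"
    by (metis e distrib_left)
  then show ?case using 2 by (simp add: x cob_Cons algebra_simps)
qed

lemma W_cob_Cons: "length x = 2 * k + 1 \<Longrightarrow> cob (\<lambda>y. W (a # y)) x = W x"
  using W_cob[of "a # x" k] by (simp add: cob_Cons)

definition Fc :: "nat list \<Rightarrow> nat \<Rightarrow> int" where
  "Fc x h = (if odd (length x) then (if h = hd x mod n then W x else 0)
             else (if dif (hd x) h < dif (hd x) (x ! 1) then W (tl x) else 0))"

lemma dif_pred: "dif a ((h + n - 1) mod n) = (dif a h + (n - 1)) mod n"
proof -
  have "int (dif a ((h + n - 1) mod n)) = ((int h + int n - 1) - int a) mod int n"
    using npos by (simp add: int_dif zmod_int mod_diff_left_eq of_nat_diff)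
  also have "\<dots> = ((int h - int a) + (int n - 1)) mod int n"
    by (simp add: algebra_simps)
  also have "\<dots> = (((int h - int a) mod int n) + (int n - 1)) mod int n"
    by (rule mod_add_left_eq[symmetric])
  also have "\<dots> = int ((dif a h + (n - 1)) mod n)"
    using npos by (simp add: int_dif zmod_int of_nat_diff add_diff_eq)
  finally show ?thesis by simp
qed

lemma dif_inj: "dif a x = dif a y \<longleftrightarrow> x mod n = y mod n"
proof -
  have "dif a x = dif a y \<longleftrightarrow> (int x - int a) mod int n = (int y - int a) mod int n"
    using int_dif[of a x] int_dif[of a y] by (metis of_nat_eq_iff)
  also have "\<dots> \<longleftrightarrow> int x mod int n = int y mod int n"
    by (simp add: mod_eq_dvd_iff)
  also have "\<dots> \<longleftrightarrow> x mod n = y mod n" by (metis of_nat_eq_iff zmod_int)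
  finally show ?thesis .
qed

lemma Fc_C1:
  assumes "length x = 2 * k + 2" "h < n"
  shows "Fc x ((h + n - 1) mod n) - Fc x h = cob (\<lambda>y. Fc y h) x"
proof -
  have "length x = Suc (Suc (2 * k))" using assms(1) by simp
  then obtain a b r where x: "x = a # b # r" and lr: "length r = 2 * k"
    by (auto simp: length_Suc_conv)
  have c1: "cob (\<lambda>y. Fc (a # y) h) (b # r) = (if h = a mod n then W (b # r) else 0)"
  proof -
    have "cob (\<lambda>y. Fc (a # y) h) (b # r) = cob (\<lambda>y. if h = a mod n then W (a # y) else 0) (b # r)"
      by (rule cob_cong_len) (simp add: Fc_def lr)
    also have "\<dots> = (if h = a mod n then W (b # r) else 0)"
      using W_cob_Cons[of "b # r" k a] lr by (simp add: cob_if)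
    finally show ?thesis .
  qed
  have ar: "(if dif a ((h + n - 1) mod n) < dif a b then 1 else 0) - (if dif a h < dif a b then 1 else 0)
        = (if h = b mod n then 1 else 0) - (if h = a mod n then (1::int) else 0)"
  proof -
    have hb: "h = b mod n \<longleftrightarrow> dif a h = dif a b" using dif_inj[of a h b] assms(2) by simp
    have ha: "h = a mod n \<longleftrightarrow> dif a h = 0" using dif_eq0_iff[of a h] assms(2) by auto
    have "dif a h < n" "dif a b < n" by (simp_all add: dif_lt)
    then show ?thesis unfolding hb ha dif_pred using npos
      by (auto simp: mod_2n)
  qed
  have "Fc x ((h + n - 1) mod n) - Fc x h
     = ((if dif a ((h + n - 1) mod n) < dif a b then 1 else 0) - (if dif a h < dif a b then 1 else 0)) * W (b # r)"
    by (simp add: Fc_def x lr algebra_simps)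
  also have "\<dots> = Fc (b # r) h - (if h = a mod n then W (b # r) else 0)"
    unfolding ar by (simp add: Fc_def lr algebra_simps)
  also have "\<dots> = cob (\<lambda>y. Fc y h) x"
    unfolding x cob_Cons[of "\<lambda>y. Fc y h" a "b # r"] c1 by simp
  finally show ?thesis .
qed

lemma Fc_C2:
  assumes "length x = 2 * k + 3" "h < n"
  shows "(\<Sum>h'<n. Fc x h') = cob (\<lambda>y. Fc y h) x"
proof -
  have "length x = Suc (Suc (Suc (2 * k)))" using assms(1) by simp
  then obtain a b c r where x: "x = a # b # c # r" and lr: "length r = 2 * k"
    by (auto simp: length_Suc_conv)
  have c1: "cob (\<lambda>y. Fc (a # b # y) h) (c # r) = (if dif a h < dif a b then W (c # r) else 0)"
  proof -
    have "cob (\<lambda>y. Fc (a # b # y) h) (c # r) = cob (\<lambda>y. if dif a h < dif a b then W (b # y) else 0) (c # r)"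
      by (rule cob_cong_len) (simp add: Fc_def lr)
    also have "\<dots> = (if dif a h < dif a b then W (c # r) else 0)"
      using W_cob_Cons[of "c # r" k b] lr by (simp add: cob_if)
    finally show ?thesis .
  qed
  have lhs: "(\<Sum>h'<n. Fc x h') = W x"
  proof -
    have "(\<Sum>h'<n. Fc x h') = (\<Sum>h'<n. if h' = a mod n then W x else 0)"
      by (rule sum.cong) (simp_all add: Fc_def x lr)
    also have "\<dots> = W x" using npos by (simp add: sum.delta)
    finally show ?thesis .
  qed
  have "cob (\<lambda>y. Fc y h) x = Fc (b # c # r) h - (Fc (a # c # r) h - (if dif a h < dif a b then W (c # r) else 0))"
    unfolding x cob_Cons[of "\<lambda>y. Fc y h" a "b # c # r"] cob_Cons[of "\<lambda>y. Fc (a # y) h" b "c # r"] c1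
    by simp
  also have "\<dots> = ((if dif b h < dif b c then 1 else 0) - (if dif a h < dif a c then 1 else 0)
       + (if dif a h < dif a b then 1 else 0)) * W (c # r)"
    by (simp add: Fc_def lr algebra_simps)
  also have "\<dots> = W x" unfolding cyc_ind[OF assms(2)] by (simp add: x)
  finally show ?thesis using lhs by simp
qed


definition TF :: "(nat list \<Rightarrow> 'b::comm_ring_1) \<Rightarrow> nat list \<Rightarrow> 'b" where
  "TF F x = (\<Sum>h<n. of_int (Fc x h) * Gam (length x - 1) (gact h F))"

lemma gact_gact_mod: "gact ((a + b) mod n) F = gact a (gact b F)"
  by (simp add: gact_mod gact_gact add.commute)

lemma TF_cob:
  assumes "length x = Suc (Suc d)"
  shows "TF (cob F) x = cob (TF F) x"
proof -
  define \<Gamma> where "\<Gamma> h = Gam d (gact h F)" for h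
  have lhs: "TF (cob F) x = (\<Sum>h<n. of_int (Fc x h) *
     (if even d then \<Gamma> ((h + 1) mod n) - \<Gamma> h else (\<Sum>j<n. \<Gamma> j)))"
  proof -
    have "TF (cob F) x = (\<Sum>h<n. of_int (Fc x h) * Gam (Suc d) (cob (gact h F)))"
      by (simp add: TF_def assms cob_gact)
    also have "\<dots> = (\<Sum>h<n. of_int (Fc x h) *
     (if even d then \<Gamma> ((h + 1) mod n) - \<Gamma> h else (\<Sum>j<n. \<Gamma> j)))"
    proof (rule sum.cong[OF refl])
      fix h
      have "(\<Sum>j<n. Gam d (gact j (gact h F))) = (\<Sum>j<n. \<Gamma> j)"
        unfolding \<Gamma>_def by (rule sum_gact_shift)
      moreover have "Gam d (gact 1 (gact h F)) = \<Gamma> ((h + 1) mod n)"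
        unfolding \<Gamma>_def gact_mod gact_gact by (simp add: add.commute)
      ultimately show "of_int (Fc x h) * Gam (Suc d) (cob (gact h F)) = of_int (Fc x h) *
         (if even d then \<Gamma> ((h + 1) mod n) - \<Gamma> h else (\<Sum>j<n. \<Gamma> j))"
        unfolding Gam_cob by (simp add: \<Gamma>_def)
    qed
    finally show ?thesis .
  qed
  have rhs: "cob (TF F) x = (\<Sum>h<n. of_int (cob (\<lambda>y. Fc y h) x) * \<Gamma> h)"
  proof -
    have "cob (TF F) x = (\<Sum>i<length x. (-1)^i * (\<Sum>h<n. of_int (Fc (del i x) h) * \<Gamma> h))"
      unfolding cob_def TF_def \<Gamma>_def using assms by simp
    also have "\<dots> = (\<Sum>h<n. (\<Sum>i<length x. (-1)^i * of_int (Fc (del i x) h)) * \<Gamma> h)"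
      by (simp add: sum_distrib_left sum_distrib_right sum.swap[of _ "{..<n}"] algebra_simps)
    also have "\<dots> = (\<Sum>h<n. of_int (cob (\<lambda>y. Fc y h) x) * \<Gamma> h)"
      by (simp add: cob_def)
    finally show ?thesis .
  qed
  show ?thesis
  proof (cases "even d")
    case True
    then obtain k where d: "d = 2 * k" by blast
    have lx: "length x = 2 * k + 2" using assms d by simp
    have "(\<Sum>h<n. of_int (Fc x h) * \<Gamma> ((h + 1) mod n))
        = (\<Sum>h<n. of_int (Fc x ((h + (n - 1)) mod n)) * \<Gamma> h)"
    proof -
      have "(\<Sum>h<n. of_int (Fc x h) * \<Gamma> ((h + 1) mod n))
          = (\<Sum>h<n. of_int (Fc x ((h + (n - 1)) mod n)) * \<Gamma> (((h + (n - 1)) mod n + 1) mod n))"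
        by (rule sum_shift_mod[OF npos, symmetric])
      also have "\<dots> = (\<Sum>h<n. of_int (Fc x ((h + (n - 1)) mod n)) * \<Gamma> h)"
      proof (rule sum.cong[OF refl])
        fix h assume "h \<in> {..<n}"
        then have "((h + (n - 1)) mod n + 1) mod n = h"
        proof -
          assume hn: "h \<in> {..<n}"
          have "((h + (n - 1)) mod n + 1) mod n = (h + (n - 1) + 1) mod n" by (rule mod_add_left_eq)
          also have "h + (n - 1) + 1 = h + n" using npos by simp
          finally show ?thesis using hn by simp
        qed
        then show "of_int (Fc x ((h + (n - 1)) mod n)) * \<Gamma> (((h + (n - 1)) mod n + 1) mod n)
             = of_int (Fc x ((h + (n - 1)) mod n)) * \<Gamma> h" by simp
      qed
      finally show ?thesis .
    qed
    moreover have "(h + (n - 1)) mod n = (h + n - 1) mod n" for h using npos by simp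
    ultimately have "TF (cob F) x = (\<Sum>h<n. of_int (Fc x ((h + n - 1) mod n) - Fc x h) * \<Gamma> h)"
      unfolding lhs using True by (simp add: algebra_simps sum_subtractf)
    also have "\<dots> = cob (TF F) x"
      unfolding rhs
    proof (rule sum.cong[OF refl])
      fix h assume "h \<in> {..<n}"
      then have "cob (\<lambda>y. Fc y h) x = Fc x ((h + n - 1) mod n) - Fc x h"
        using Fc_C1[OF lx, of h] by simp
      then show "of_int (Fc x ((h + n - 1) mod n) - Fc x h) * \<Gamma> h = of_int (cob (\<lambda>y. Fc y h) x) * \<Gamma> h"
        by simp
    qed
    finally show ?thesis .
  next
    case False
    then obtain k where d: "d = 2 * k + 1" by (metis oddE)
    have lx: "length x = 2 * k + 3" using assms d by simp
    have "TF (cob F) x = (\<Sum>h<n. of_int (Fc x h)) * (\<Sum>j<n. \<Gamma> j)"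
      unfolding lhs using False by (simp add: sum_distrib_right)
    also have "\<dots> = cob (TF F) x"
    proof -
      have "(\<Sum>h<n. of_int (cob (\<lambda>y. Fc y h) x) * \<Gamma> h) = (\<Sum>h<n. of_int (\<Sum>h'<n. Fc x h') * \<Gamma> h)"
        by (rule sum.cong[OF refl]) (simp add: Fc_C2[OF lx])
      also have "\<dots> = (\<Sum>h<n. of_int (Fc x h)) * (\<Sum>j<n. \<Gamma> j)"
        by (simp add: sum_distrib_left)
      finally show ?thesis unfolding rhs by simp
    qed
    finally show ?thesis .
  qed
qed


lemma mod_add_cancel_iff: "(h + g) mod n = (a + g) mod n \<longleftrightarrow> h mod n = a mod n"
  by (metis nat_mod_add_cancel mod_add_left_eq)

lemma Fc_act:
  assumes "z \<noteq> []" "h < n"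
  shows "Fc (act g z) ((h + g) mod n) = Fc z h"
proof -
  obtain a r where z: "z = a # r" using assms(1) by (cases z) auto
  show ?thesis
  proof (cases "odd (length z)")
    case True
    have "(h + g) mod n = (a + g) mod n \<longleftrightarrow> h = a mod n"
      using assms(2) by (simp add: mod_add_cancel_iff)
    then show ?thesis using True unfolding Fc_def
      by (simp add: W_act[of g "a # r", simplified] z)
  next
    case False
    then obtain b r' where r: "r = b # r'" using z by (cases r) auto
    have "W (act g (b # r')) = W (b # r')" by (rule W_act)
    then show ?thesis using False unfolding Fc_def z r
      by (simp add: dif_shift)
  qed
qed

lemma Fc_map_mod:
  assumes "h < n"
  shows "Fc (map (\<lambda>v. v mod n) x) h = Fc x h"
proof (cases "x = []")
  case True then show ?thesis by simp
next
  case False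
  then show ?thesis using Fc_act[OF False assms, of 0] assms by (simp add: act_0)
qed

lemma TF_act:
  assumes "z \<noteq> []"
  shows "TF F (act g z) = TF (gact g F) z"
proof -
  have "TF F (act g z) = (\<Sum>h<n. of_int (Fc (act g z) ((h + g) mod n)) * Gam (length z - 1) (gact ((h + g) mod n) F))"
    unfolding TF_def length_act
    by (rule sum_shift_mod[OF npos, symmetric, where f = "\<lambda>h. of_int (Fc (act g z) h) * Gam (length z - 1) (gact h F)"])
  also have "\<dots> = TF (gact g F) z"
    unfolding TF_def
    by (rule sum.cong[OF refl]) (simp add: Fc_act[OF assms] gact_gact_mod)
  finally show ?thesis .
qed

lemma TF_map_mod: "TF F (map (\<lambda>v. v mod n) x) = TF F x"
  unfolding TF_def by (rule sum.cong[OF refl]) (simp add: Fc_map_mod)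

lemma nrm_TF: "nrm (TF F)"
  by (simp add: nrm_def TF_map_mod)

lemma TF_deg0:
  assumes "nrm F"
  shows "TF F [a] = F [a]"
proof -
  have "TF F [a] = (\<Sum>h<n. if h = a mod n then F (act h [0]) else 0)"
    unfolding TF_def by (rule sum.cong[OF refl]) (simp add: Fc_def gact_def)
  also have "\<dots> = F (act (a mod n) [0])" using npos by (simp add: sum.delta)
  also have "\<dots> = F (map (\<lambda>v. v mod n) [a])" by simp
  also have "\<dots> = F [a]" using spec[OF assms[unfolded nrm_def], of "[a]"] by simp
  finally show ?thesis .
qed

lemma TF_diff: "TF (\<lambda>x. F x - G x) y = TF F y - TF G y"
  unfolding TF_def by (simp add: gact_eq Gam_diff algebra_simps sum_subtractf)

lemma nrm_ss: "nrm F \<Longrightarrow> nrm (ss F)"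
  unfolding nrm_def ss_def by (metis list.simps(9) mod_0)

primrec Hn :: "nat \<Rightarrow> (nat list \<Rightarrow> 'b::comm_ring_1) \<Rightarrow> nat list \<Rightarrow> 'b" where
  "Hn 0 F = (\<lambda>x. 0)"
| "Hn (Suc k) F = (\<lambda>x. let g = hd x mod n; T = ss (gact g F); z = act (n - g) x
                         in T z - TF T z - cob (Hn k T) z)"

lemma Hn_diff: "Hn k (\<lambda>x. F x - G x) = (\<lambda>x. Hn k F x - Hn k G x)"
proof (induction k arbitrary: F G)
  case 0 then show ?case by simp
next
  case (Suc k)
  show ?case
  proof (rule ext)
    fix x
    define g where "g = hd x mod n"
    have eT: "ss (gact g (\<lambda>x. F x - G x)) = (\<lambda>y. ss (gact g F) y - ss (gact g G) y)"
      by (simp add: ss_eq gact_eq)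
    show "Hn (Suc k) (\<lambda>x. F x - G x) x = Hn (Suc k) F x - Hn (Suc k) G x"
      by (simp add: Let_def g_def[symmetric] eT TF_diff Suc.IH cob_diff)
  qed
qed

lemma Hn_zero: "Hn k (\<lambda>x. 0) = (\<lambda>x. 0)"
  using Hn_diff[of k "\<lambda>x. 0" "\<lambda>x. 0"] by simp

lemma nrm_Hn: "nrm (Hn k F)"
proof (cases k)
  case 0 then show ?thesis by (simp add: nrm_def)
next
  case (Suc k')
  have "Hn k F (map (\<lambda>v. v mod n) x) = Hn k F x" for x
  proof (cases x)
    case Nil then show ?thesis by simp
  next
    case (Cons a r)
    then show ?thesis by (simp add: Suc Let_def act_map_mod[of _ "a # r", simplified])
  qed
  then show ?thesis by (simp add: nrm_def)
qed

lemma shift_aux: "(n - (a + g) mod n + g) mod n = (n - a mod n) mod n"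
proof -
  have l1: "(a + g) mod n < n" "a mod n < n" using npos by simp_all
  have l2: "(a + g) mod n \<le> n" using l1 by simp
  have "int ((n - (a + g) mod n + g) mod n) = int (n - (a + g) mod n + g) mod int n"
    by (simp only: zmod_int)
  also have "int (n - (a + g) mod n + g) = int n - int ((a + g) mod n) + int g"
    using l2 by (simp add: of_nat_diff)
  finally have "int ((n - (a + g) mod n + g) mod n) = (int n - int ((a + g) mod n) + int g) mod int n" .
  also have "\<dots> = (int n - (int a + int g) mod int n + int g) mod int n"
    by (simp add: zmod_int)
  also have "\<dots> = (int n - (int a + int g) + int g) mod int n"
    by (metis (no_types, opaque_lifting) add_diff_eq mod_add_left_eq mod_diff_right_eq)
  also have "\<dots> = (int n - int a) mod int n"
    by simp
  also have "\<dots> = (int n - int a mod int n) mod int n"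
    by (rule mod_diff_right_eq[symmetric])
  also have "\<dots> = int ((n - a mod n) mod n)"
    using l1 by (simp add: zmod_int of_nat_diff)
  finally show ?thesis by simp
qed

lemma Hn_equiv:
  assumes "y \<noteq> []"
  shows "Hn k F (act g y) = Hn k (gact g F) y"
proof (cases k)
  case 0 then show ?thesis by simp
next
  case (Suc k')
  obtain a r where y: "y = a # r" using assms by (cases y) auto
  have g1: "gact ((a + g) mod n) F = gact (a mod n) (gact g F)"
    by (simp add: gact_gact gact_mod[of "a + g"] gact_cong[of "a mod n + g" "a + g"] mod_add_left_eq)
  have z1: "act (n - (a + g) mod n) (act g y) = act (n - a mod n) y"
    by (simp add: act_act act_cong[OF shift_aux] act_mod[of "n - a mod n", symmetric])
  have h1: "hd (act g y) mod n = (a + g) mod n" by (simp add: y)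
  have h2: "hd y mod n = a mod n" by (simp add: y)
  show ?thesis
    unfolding Suc Hn.simps Let_def h1 h2 g1 z1[folded y] by (rule refl)
qed


lemma homotopy_step:
  fixes F :: "nat list \<Rightarrow> 'b::comm_ring_1"
  assumes P: "\<And>(S :: nat list \<Rightarrow> 'b) z. nrm S \<Longrightarrow> length z = Suc k \<Longrightarrow>
                TF (cob S) z - cob S z + cob (Hn k (cob S)) z = 0"
    and nF: "nrm F" and lx: "length x = Suc k"
  shows "Hn (Suc k) (cob F) x + cob (Hn k F) x = F x - TF F x"
proof -
  define g where "g = hd x mod n"
  define G where "G = gact g F"
  define z where "z = act (n - g) x"
  have xne: "x \<noteq> []" using lx by auto
  have gn: "g < n" using npos by (simp add: g_def)
  have lz: "length z = Suc k" using lx by (simp add: z_def)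
  then have zne: "z \<noteq> []" by auto
  have xz: "act g z = map (\<lambda>v. v mod n) x"
  proof -
    have "act g z = act (g + (n - g)) x" by (simp add: z_def act_act)
    also have "\<dots> = act 0 x" using gn by (intro act_cong) simp
    finally show ?thesis by (simp add: act_0)
  qed
  have nG: "nrm G" by (simp add: G_def nrm_gact)
  have nsG: "nrm (ss G)" using nG by (rule nrm_ss)
  have T: "ss (gact g (cob F)) = (\<lambda>y. G y - cob (ss G) y)"
    by (rule ext) (simp add: cob_gact[symmetric] G_def ss_cob)
  have a: "Hn (Suc k) (cob F) x = (G z - cob (ss G) z) - (TF G z - TF (cob (ss G)) z)
             - (cob (Hn k G) z - cob (Hn k (cob (ss G))) z)"
    by (simp add: Let_def g_def[symmetric] z_def[symmetric] T TF_diff Hn_diff cob_diff)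
  have b: "cob (Hn k F) x = cob (Hn k G) z"
  proof -
    have "cob (Hn k F) x = cob (Hn k F) (map (\<lambda>v. v mod n) x)"
      using nrm_cob[OF nrm_Hn[of k F]] by (simp add: nrm_def)
    also have "\<dots> = cob (\<lambda>y. Hn k F (act g y)) z"
      unfolding xz[symmetric] cob_def by (simp add: del_act)
    also have "\<dots> = cob (Hn k G) z"
    proof (rule cob_cong_len)
      fix y :: "nat list" assume "Suc (length y) = length z"
      show "Hn k F (act g y) = Hn k G y"
      proof (cases "y = []")
        case True
        then have "k = 0" using \<open>Suc (length y) = length z\<close> lz by simp
        then show ?thesis by simp
      next
        case False then show ?thesis by (simp add: Hn_equiv G_def)
      qed
    qed
    finally show ?thesis .
  qed
  have c: "F x - TF F x = G z - TF G z"
  proof -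
    have "G z = F x" using nF unfolding G_def gact_def xz nrm_def by simp
    moreover have "TF G z = TF F x"
      unfolding G_def TF_act[OF zne, symmetric] xz by (simp add: TF_map_mod)
    ultimately show ?thesis by simp
  qed
  have "TF (cob (ss G)) z - cob (ss G) z + cob (Hn k (cob (ss G))) z = 0"
    by (rule P[OF nsG lz])
  then show ?thesis unfolding a b c by (simp add: algebra_simps)
qed

lemma homotopy_P0:
  assumes "nrm S" "length z = Suc 0"
  shows "TF (cob S) z - cob S z + cob (Hn 0 (cob S)) z = 0"
proof -
  obtain a where z: "z = [a]" using assms(2) by (auto simp: length_Suc_conv)
  show ?thesis using TF_deg0[OF nrm_cob[OF assms(1)], of a] by (simp add: z cob_def)
qed

lemma homotopy_PSuc:
  fixes S :: "nat list \<Rightarrow> 'b::comm_ring_1"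
  assumes IH: "\<And>(F :: nat list \<Rightarrow> 'b) x. nrm F \<Longrightarrow> length x = Suc k \<Longrightarrow>
                 Hn (Suc k) (cob F) x + cob (Hn k F) x = F x - TF F x"
    and nS: "nrm S" and lz: "length z = Suc (Suc k)"
  shows "TF (cob S) z - cob S z + cob (Hn (Suc k) (cob S)) z = 0"
proof -
  have "cob (Hn (Suc k) (cob S)) z = cob (\<lambda>y. (S y - TF S y) - cob (Hn k S) y) z"
  proof (rule cob_cong_len)
    fix y :: "nat list" assume "Suc (length y) = length z"
    then have "length y = Suc k" using lz by simp
    then show "Hn (Suc k) (cob S) y = (S y - TF S y) - cob (Hn k S) y"
      using IH[OF nS] by (simp add: algebra_simps)
  qed
  also have "\<dots> = cob S z - cob (TF S) z"
    by (simp add: cob_diff cob_cob)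
  finally show ?thesis using TF_cob[OF lz] by simp
qed

lemma homotopy:
  "nrm F \<Longrightarrow> length x = Suc k \<Longrightarrow> Hn (Suc k) (cob F) x + cob (Hn k F) x = F x - TF F x"
proof (induction k arbitrary: F x)
  case 0
  show ?case by (rule homotopy_step[OF homotopy_P0 0(1) 0(2)])
next
  case (Suc k)
  show ?case by (rule homotopy_step[OF homotopy_PSuc[OF Suc.IH] Suc.prems])
qed

end


declare Suc_0_mod_eq[simp del]

lemma sum_ind_lt: "m \<le> N \<Longrightarrow> (\<Sum>t<N. if t < m then 1 else 0 :: int) = int m"
  by (induction N) (auto simp: less_Suc_eq le_Suc_eq)

context cyc
begin

fun diffs :: "nat list \<Rightarrow> nat list" where
  "diffs (a # b # r) = dif a b # diffs (b # r)"
| "diffs _ = []"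

lemma diffs_act: "diffs (act g x) = diffs x"
  by (induction x rule: diffs.induct) (simp_all add: dif_shift)

lemma diffs_map_mod: "diffs (map (\<lambda>v. v mod n) x) = diffs x"
  by (induction x rule: diffs.induct) simp_all

lemma length_diffs[simp]: "length (diffs x) = length x - 1"
  by (induction x rule: diffs.induct) simp_all

lemma diffs_Cons2: "y \<noteq> [] \<Longrightarrow> diffs (a # y) = dif a (hd y) # diffs y"
  by (cases y) simp_all

fun iota_from :: "nat \<Rightarrow> nat list \<Rightarrow> nat list" where
  "iota_from a [] = [a]"
| "iota_from a (g # gs) = a # iota_from ((a + g) mod n) gs"

lemma length_iota[simp]: "length (iota_from a g) = Suc (length g)"
  by (induction g arbitrary: a) simp_all

lemma hd_iota[simp]: "hd (iota_from a g) = a"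
  by (cases g) simp_all

lemma iota_ne[simp]: "iota_from a g \<noteq> []"
  by (cases g) simp_all

lemma diffs_iota: "(\<forall>v\<in>set g. v < n) \<Longrightarrow> diffs (iota_from a g) = g"
proof (induction g arbitrary: a)
  case Nil then show ?case by simp
next
  case (Cons v gs)
  then show ?case using dif_from[of a v] by (simp add: diffs_Cons2)
qed

lemma act_iota: "act c (iota_from a g) = iota_from ((a + c) mod n) g"
proof (induction g arbitrary: a)
  case Nil then show ?case by simp
next
  case (Cons v gs)
  have "((a + v) mod n + c) mod n = ((a + c) mod n + v) mod n"
  proof -
    have "((a + v) mod n + c) mod n = (a + v + c) mod n" by (rule mod_add_left_eq)
    moreover have "((a + c) mod n + v) mod n = (a + c + v) mod n" by (rule mod_add_left_eq)
    ultimately show ?thesis by (simp add: add.commute add.left_commute)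
  qed
  then show ?case using Cons by simp
qed

lemma iota_diffs: "iota_from (a mod n) (diffs (a # r)) = map (\<lambda>v. v mod n) (a # r)"
proof (induction r arbitrary: a)
  case Nil then show ?case by simp
next
  case (Cons b r)
  have "(a mod n + dif a b) mod n = b mod n"
  proof -
    have "int ((a mod n + dif a b) mod n) = (int a mod int n + (int b - int a) mod int n) mod int n"
      by (simp add: zmod_int int_dif)
    also have "\<dots> = (int a + (int b - int a)) mod int n" by (simp add: mod_add_eq)
    also have "\<dots> = int (b mod n)" by (simp add: zmod_int)
    finally show ?thesis by simp
  qed
  then show ?case using Cons[of b] by simp
qed

lemma map_mod_iota: "x \<noteq> [] \<Longrightarrow> map (\<lambda>v. v mod n) x = act (hd x) (iota_from 0 (diffs x))"
  by (cases x) (simp_all only: act_iota iota_diffs list.sel add_0, simp)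

definition inv :: "(nat list \<Rightarrow> 'b) \<Rightarrow> bool" where
  "inv F \<longleftrightarrow> (\<forall>h. gact h F = F)"

lemma inv_nrm_eval:
  assumes "inv F" "nrm F" "x \<noteq> []"
  shows "F x = F (iota_from 0 (diffs x))"
proof -
  have "F x = F (map (\<lambda>v. v mod n) x)" using assms(2) by (simp add: nrm_def)
  also have "\<dots> = gact (hd x) F (iota_from 0 (diffs x))"
    using assms(3) by (simp add: map_mod_iota gact_def)
  also have "\<dots> = F (iota_from 0 (diffs x))" using assms(1) by (simp add: inv_def)
  finally show ?thesis .
qed

lemma inv_diffs: "inv (\<lambda>x. \<phi> (diffs x))"
  by (simp add: inv_def gact_eq diffs_act)

lemma nrm_diffs: "nrm (\<lambda>x. \<phi> (diffs x))"
  by (simp add: nrm_def diffs_map_mod)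

lemma inv_Hn:
  assumes "inv F"
  shows "x \<noteq> [] \<Longrightarrow> Hn k F (act h x) = Hn k F x"
  using assms by (simp add: Hn_equiv inv_def)

definition gdelta :: "nat \<Rightarrow> (nat list \<Rightarrow> 'b::comm_ring_1) \<Rightarrow> nat list \<Rightarrow> 'b" where
  "gdelta k \<phi> g = \<phi> (tl g) + (\<Sum>j\<in>{1..k}. (-1)^j * \<phi> (merge n j g)) + (-1)^(Suc k) * \<phi> (butlast g)"

lemma merge_Cons: "1 \<le> j \<Longrightarrow> merge n (Suc j) (u # w) = u # merge n j w"
  by (cases j) (simp_all add: merge_def)

lemma diffs_tl: "diffs (tl x) = tl (diffs x)"
  by (induction x rule: diffs.induct) simp_all

lemma diffs_butlast: "diffs (butlast x) = butlast (diffs x)"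
proof (induction x rule: diffs.induct)
  case (1 a b r)
  then show ?case by (cases r) (simp_all add: diffs_Cons2)
qed simp_all

lemma diffs_del:
  "1 \<le> j \<Longrightarrow> Suc j < length x \<Longrightarrow> diffs (del j x) = merge n j (diffs x)"
proof (induction x arbitrary: j rule: diffs.induct)
  case (1 a b r)
  show ?case
  proof (cases j)
    case 0 then show ?thesis using 1 by simp
  next
    case (Suc j')
    show ?thesis
    proof (cases j')
      case 0
      then obtain c r' where r: "r = c # r'" using 1 Suc by (cases r) auto
      show ?thesis using Suc 0 by (simp add: r merge_def dif_add)
    next
      case (Suc j'')
      have ne: "del j' (b # r) \<noteq> []" using 1 \<open>j = Suc j'\<close> by (auto simp: del_def)
      have hdb: "hd (del j' (b # r)) = b" using Suc by simp
      have j1: "1 \<le> j'" using Suc by simp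
      have ih: "diffs (del j' (b # r)) = merge n j' (diffs (b # r))"
        using 1(1)[OF j1] 1(3) \<open>j = Suc j'\<close> by simp
      have "diffs (del j (a # b # r)) = diffs (a # del j' (b # r))" using \<open>j = Suc j'\<close> by simp
      also have "\<dots> = dif a b # diffs (del j' (b # r))" using ne hdb diffs_Cons2 by metis
      also have "\<dots> = dif a b # merge n j' (diffs (b # r))" using ih by simp
      also have "\<dots> = merge n j (diffs (a # b # r))" using \<open>j = Suc j'\<close> j1 by (simp add: merge_Cons)
      finally show ?thesis .
    qed
  qed
qed simp_all

lemma del_last: "del (length x - 1) x = butlast x"
  by (simp add: del_def butlast_conv_take)

lemma cob_diffs:
  assumes "length x = Suc (Suc k)"
  shows "cob (\<lambda>y. \<phi> (diffs y)) x = gdelta k \<phi> (diffs x)"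
proof -
  have "cob (\<lambda>y. \<phi> (diffs y)) x = (\<Sum>i<Suc (Suc k). (-1)^i * \<phi> (diffs (del i x)))"
    by (simp add: cob_def assms)
  also have "\<dots> = \<phi> (diffs (del 0 x)) + (\<Sum>i<k. (-1)^(Suc i) * \<phi> (diffs (del (Suc i) x)))
       + (-1)^(Suc k) * \<phi> (diffs (del (Suc k) x))"
    by (subst sum.lessThan_Suc_shift, subst sum.lessThan_Suc) (simp add: algebra_simps)
  also have "\<dots> = gdelta k \<phi> (diffs x)"
  proof -
    obtain a r where x: "x = a # r" using assms by (cases x) auto
    have e0: "diffs (del 0 x) = tl (diffs x)" by (simp add: x diffs_tl[of "a # r", simplified])
    have e1: "diffs (del (Suc k) x) = butlast (diffs x)"
      using del_last[of x] assms by (simp add: diffs_butlast)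
    have e2: "(\<Sum>i<k. (-1)^(Suc i) * \<phi> (diffs (del (Suc i) x)))
            = (\<Sum>j\<in>{1..k}. (-1)^j * \<phi> (merge n j (diffs x)))"
      by (simp add: sum.atLeast1_atMost_eq diffs_del assms)
    show ?thesis unfolding gdelta_def e0 e1 e2 ..
  qed
  finally show ?thesis .
qed

lemma one_mod_n[simp]: "Suc 0 mod n = Suc 0" using n2 by simp
lemma one_mod_n'[simp]: "(1::nat) mod n = 1" using n2 by simp

definition wh :: "nat list \<Rightarrow> int" where
  "wh x = (\<Sum>h<n. Fc x h)"

lemma TF_inv: "inv F \<Longrightarrow> TF F x = of_int (wh x) * Gam (length x - 1) F"
  by (simp add: TF_def inv_def wh_def sum_distrib_right)

lemma wh_odd: "odd (length x) \<Longrightarrow> wh x = W x"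
  unfolding wh_def Fc_def using npos by (simp add: sum.delta)

lemma dif_alt: "dif a h = (h + (n - a mod n)) mod n"
proof -
  have l: "a mod n \<le> n" using npos by (simp add: order.strict_implies_order)
  have "int ((h + (n - a mod n)) mod n) = (int h + int n - int a mod int n) mod int n"
    using l by (simp add: zmod_int of_nat_diff)
  also have "\<dots> = (int h + int n - int a) mod int n" by (rule mod_diff_right_eq)
  also have "\<dots> = ((int h - int a) + int n) mod int n" by (simp add: algebra_simps)
  also have "\<dots> = (int h - int a) mod int n" by (rule mod_add_self2)
  finally show ?thesis by (metis int_dif of_nat_eq_iff)
qed

lemma count_dif: "m \<le> n \<Longrightarrow> (\<Sum>h<n. if dif a h < m then 1 else 0 :: int) = int m"
  unfolding dif_alt
  using sum_shift_mod[OF npos, of "\<lambda>t. if t < m then 1 else 0 :: int" "n - a mod n"] sum_ind_lt[of m n]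
  by simp

lemma wh_even:
  assumes "length x = Suc (Suc r)" "even r"
  shows "wh x = int (dif (hd x) (x ! 1)) * W (tl x)"
proof -
  have fc: "Fc x h = (if dif (hd x) h < dif (hd x) (x ! 1) then 1 else 0) * W (tl x)" for h
    using assms by (simp add: Fc_def)
  have "wh x = (\<Sum>h<n. if dif (hd x) h < dif (hd x) (x ! 1) then 1 else 0) * W (tl x)"
    unfolding wh_def fc by (simp add: sum_distrib_right)
  also have "\<dots> = int (dif (hd x) (x ! 1)) * W (tl x)"
    using count_dif[of "dif (hd x) (x ! 1)" "hd x"] dif_lt[of "hd x" "x ! 1"] by simp
  finally show ?thesis .
qed

lemma wh_map_mod: "wh (map (\<lambda>v. v mod n) x) = wh x"
  unfolding wh_def by (rule sum.cong[OF refl]) (simp add: Fc_map_mod)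

lemma car3_0_i: "i < n \<Longrightarrow> car3 0 i ((i + 1) mod n) = (if i = n - 1 then 1 else 0)"
proof -
  assume i: "i < n"
  have "dif 0 i = i" using i by (simp add: dif_0)
  moreover have "dif i ((i + 1) mod n) = 1" using dif_from[of i 1] n2 by simp
  ultimately show ?thesis unfolding car3_def using i by auto
qed

lemma car3_0_ii: "i < n \<Longrightarrow> car3 0 i i = 0"
  by (simp add: car3_def dif_0)

lemma Gam_W: "Gam (2 * k) (\<lambda>x. of_int (W x) :: 'b::comm_ring_1) = 1"
proof (induction k)
  case 0 then show ?case by simp
next
  case (Suc k)
  define F where "F = (\<lambda>x. of_int (W x) :: 'b)"
  have step: "Gam (Suc (2 * k)) (gact i (ss F)) = (if i = n - 1 then 1 else 0)" if i: "i < n" for i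
  proof -
    have a: "Gam (2 * k) (gact 1 (ss (gact i (ss F)))) = of_int (car3 0 i ((i + 1) mod n))"
    proof -
      have "Gam (2 * k) (gact 1 (ss (gact i (ss F))))
          = Gam (2 * k) (\<lambda>y. of_int (car3 0 i ((i + 1) mod n)) * F y)"
      proof (rule Gam_cong)
        fix y :: "nat list" assume "length y = Suc (2 * k)" "hd y = 0"
        then obtain y' where y: "y = 0 # y'" by (cases y) auto
        have "W (((i + 1) mod n) # act (i + 1) y') = W y"
          using W_act[of "i + 1" "0 # y'"] by (simp add: y)
        then show "gact 1 (ss (gact i (ss F))) y = of_int (car3 0 i ((i + 1) mod n)) * F y"
          using i by (simp add: F_def gact_def ss_def y act_act add.commute mod_add_left_eq)
      qed
      also have "\<dots> = of_int (car3 0 i ((i + 1) mod n))"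
        by (simp add: Gam_multl Suc.IH[unfolded F_def[symmetric]])
      finally show ?thesis .
    qed
    have b: "Gam (2 * k) (ss (gact i (ss F))) = 0"
    proof -
      have "Gam (2 * k) (ss (gact i (ss F))) = Gam (2 * k) (\<lambda>y. 0)"
      proof (rule Gam_cong)
        fix y :: "nat list" assume "length y = Suc (2 * k)" "hd y = 0"
        then obtain y' where y: "y = 0 # y'" by (cases y) auto
        show "ss (gact i (ss F)) y = 0"
          using i by (simp add: F_def gact_def ss_def y car3_0_ii)
      qed
      then show ?thesis by (simp add: Gam_zero)
    qed
    show ?thesis using a b car3_0_i[OF i] by simp
  qed
  have "Gam (2 * Suc k) F = (\<Sum>i<n. Gam (Suc (2 * k)) (gact i (ss F)))" by simp
  also have "\<dots> = (\<Sum>i<n. if i = n - 1 then 1 else 0)"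
    by (rule sum.cong[OF refl], rule step) simp
  also have "\<dots> = 1" using npos by (simp add: sum.delta)
  finally show ?case by (simp add: F_def)
qed

lemma Gam_wh: "Gam d (\<lambda>x. of_int (wh x) :: 'b::comm_ring_1) = 1"
proof (cases "even d")
  case True
  then obtain k where d: "d = 2 * k" by blast
  have "Gam d (\<lambda>x. of_int (wh x) :: 'b) = Gam d (\<lambda>x. of_int (W x))"
    by (rule Gam_cong) (simp add: wh_odd d)
  then show ?thesis by (simp add: d Gam_W)
next
  case False
  then obtain k where d: "d = Suc (2 * k)" by (metis oddE add.commute plus_1_eq_Suc)
  define F where "F = (\<lambda>x. of_int (wh x) :: 'b)"
  have a: "Gam (2 * k) (gact 1 (ss F)) = 1"
  proof -
    have "Gam (2 * k) (gact 1 (ss F)) = Gam (2 * k) (\<lambda>x. of_int (W x))"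
    proof (rule Gam_cong)
      fix y :: "nat list" assume ly: "length y = Suc (2 * k)" "hd y = 0"
      then obtain y' where y: "y = 0 # y'" by (cases y) auto
      have "wh (0 # act 1 y) = int (dif 0 1) * W (act 1 y)"
        using wh_even[of "0 # act 1 y" "2 * k"] ly by (simp add: y)
      also have "\<dots> = W y" using n2 by (simp add: dif_0 W_act)
      finally show "gact 1 (ss F) y = of_int (W y)" by (simp add: F_def gact_def ss_def)
    qed
    then show ?thesis by (simp add: Gam_W)
  qed
  have b: "Gam (2 * k) (ss F) = 0"
  proof -
    have "Gam (2 * k) (ss F) = Gam (2 * k) (\<lambda>x. 0)"
    proof (rule Gam_cong)
      fix y :: "nat list" assume ly: "length y = Suc (2 * k)" "hd y = 0"
      then obtain y' where y: "y = 0 # y'" by (cases y) auto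
      have "wh (0 # y) = 0"
        using wh_even[of "0 # y" "2 * k"] ly by (simp add: y)
      then show "ss F y = 0" by (simp add: F_def ss_def)
    qed
    then show ?thesis by (simp add: Gam_zero)
  qed
  show ?thesis using a b by (simp add: d F_def[symmetric])
qed

lemma Gam_cob_inv:
  assumes "inv F" "of_nat n = (0 :: 'b::comm_ring_1)"
  shows "Gam (Suc d) (cob (F :: nat list \<Rightarrow> 'b)) = 0"
  using assms unfolding Gam_cob inv_def by simp

lemma set_diffs: "v \<in> set (diffs x) \<Longrightarrow> v < n"
  by (induction x rule: diffs.induct) (auto simp: dif_lt)

lemma inv_Hn': "inv F \<Longrightarrow> inv (Hn k F)"
  unfolding inv_def
proof (intro allI ext)
  fix h y assume "\<forall>h. gact h F = F"
  show "gact h (Hn k F) y = Hn k F y"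
  proof (cases "y = []")
    case True then show ?thesis by (simp add: gact_def)
  next
    case False then show ?thesis using \<open>\<forall>h. gact h F = F\<close> by (simp add: gact_def Hn_equiv)
  qed
qed

lemma group_exist:
  fixes \<phi> :: "nat list \<Rightarrow> 'b::comm_ring_1"
  assumes d: "1 \<le> d"
    and zero: "\<And>g. length g \<noteq> d \<Longrightarrow> \<phi> g = 0"
    and cocyc: "\<And>g. length g = Suc d \<Longrightarrow> (\<forall>v\<in>set g. v < n) \<Longrightarrow> gdelta d \<phi> g = 0"
  shows "\<exists>\<chi> c. \<forall>g. length g = d \<longrightarrow> (\<forall>v\<in>set g. v < n) \<longrightarrow>
            \<phi> g = of_int (wh (iota_from 0 g)) * c + gdelta (d - 1) \<chi> g"
proof -
  define \<Phi> where "\<Phi> = (\<lambda>x. \<phi> (diffs x))"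
  have cob0: "cob \<Phi> = (\<lambda>x. 0)"
  proof (rule ext)
    fix x :: "nat list"
    show "cob \<Phi> x = 0"
    proof (cases "length x = Suc (Suc d)")
      case True
      then show ?thesis unfolding \<Phi>_def cob_diffs[OF True]
        using cocyc[of "diffs x"] True by (simp add: set_diffs)
    next
      case False
      have "\<Phi> (del i x) = 0" if "i < length x" for i
        using that False d unfolding \<Phi>_def by (intro zero) auto
      then show ?thesis by (simp add: cob_def)
    qed
  qed
  define \<chi> where "\<chi> = (\<lambda>g. Hn d \<Phi> (iota_from 0 g))"
  define c where "c = Gam d \<Phi>"
  have "\<phi> g = of_int (wh (iota_from 0 g)) * c + gdelta (d - 1) \<chi> g"
    if lg: "length g = d" and sg: "\<forall>v\<in>set g. v < n" for g
  proof -
    define x where "x = iota_from 0 g"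
    have lx: "length x = Suc d" by (simp add: x_def lg)
    have H: "Hn (Suc d) (cob \<Phi>) x + cob (Hn d \<Phi>) x = \<Phi> x - TF \<Phi> x"
      by (rule homotopy[OF _ lx]) (simp add: \<Phi>_def nrm_diffs)
    have h1: "Hn (Suc d) (cob \<Phi>) x = 0" by (simp add: cob0 Hn_zero)
    have h2: "\<Phi> x = \<phi> g" by (simp add: \<Phi>_def x_def diffs_iota[OF sg])
    have invP: "inv \<Phi>" by (simp add: \<Phi>_def inv_diffs)
    have h3: "TF \<Phi> x = of_int (wh x) * c" by (simp add: TF_inv[OF invP] lx c_def)
    have h4: "cob (Hn d \<Phi>) x = gdelta (d - 1) \<chi> g"
    proof -
      have "cob (Hn d \<Phi>) x = cob (\<lambda>y. \<chi> (diffs y)) x"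
      proof (rule cob_cong_len)
        fix y :: "nat list" assume "Suc (length y) = length x"
        then have "y \<noteq> []" using lx d by auto
        then show "Hn d \<Phi> y = \<chi> (diffs y)"
          unfolding \<chi>_def by (rule inv_nrm_eval[OF inv_Hn'[OF invP] nrm_Hn])
      qed
      also have "\<dots> = gdelta (d - 1) \<chi> (diffs x)"
        by (rule cob_diffs) (use lx d in simp)
      also have "\<dots> = gdelta (d - 1) \<chi> g" by (simp add: x_def diffs_iota[OF sg])
      finally show ?thesis .
    qed
    show ?thesis using H h1 h2 h3 h4 by (simp add: x_def algebra_simps)
  qed
  then show ?thesis by blast
qed

lemma group_unique:
  fixes \<psi> :: "nat list \<Rightarrow> 'b::comm_ring_1" and E :: 'b
  assumes char: "of_nat n = (0::'b)" and d: "1 \<le> d"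
    and eq: "\<And>g. length g = d \<Longrightarrow> (\<forall>v\<in>set g. v < n) \<Longrightarrow>
               gdelta (d - 1) \<psi> g = of_int (wh (iota_from 0 g)) * E"
  shows "E = 0"
proof -
  define \<Psi> where "\<Psi> = (\<lambda>x. \<psi> (diffs x))"
  have dd: "Suc (d - 1) = d" using d by simp
  have "Gam (Suc (d - 1)) (cob \<Psi>) = 0"
    by (rule Gam_cob_inv) (simp_all add: \<Psi>_def inv_diffs char)
  then have z: "Gam d (cob \<Psi>) = 0" unfolding dd .
  have "Gam d (cob \<Psi>) = Gam d (\<lambda>x. of_int (wh x) * E)"
  proof (rule Gam_cong)
    fix y :: "nat list" assume ly: "length y = Suc d" and hy: "hd y = 0"
    have "cob \<Psi> y = gdelta (d - 1) \<psi> (diffs y)"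
      unfolding \<Psi>_def by (rule cob_diffs) (use ly d in simp)
    also have "\<dots> = of_int (wh (iota_from 0 (diffs y))) * E"
      by (rule eq) (auto simp: ly set_diffs)
    also have "iota_from 0 (diffs y) = map (\<lambda>v. v mod n) y"
    proof -
      obtain a r where y: "y = a # r" using ly by (cases y) auto
      show ?thesis using iota_diffs[of a r] hy by (simp add: y)
    qed
    finally show "cob \<Psi> y = of_int (wh y) * E" by (simp add: wh_map_mod)
  qed
  also have "\<dots> = E" by (simp add: Gam_multr Gam_wh)
  finally show ?thesis using z by simp
qed

end


declare Suc_0_mod_eq[simp del]

lemma smult_sum_right: "smult c (\<Sum>i\<in>S. f i) = (\<Sum>i\<in>S. smult c (f i))"
  by (induction S rule: infinite_finite_induct) (simp_all add: smult_add_right)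

lemma red_alt:
  assumes "degree p < N"
  shows "red n p = (\<Sum>i<N. monom (coeff p i) (i mod n))"
  unfolding red_def
proof (rule sum.mono_neutral_left)
  show "finite {..<N}" by simp
  show "{..degree p} \<subseteq> {..<N}" using assms by auto
  show "\<forall>i\<in>{..<N} - {..degree p}. monom (coeff p i) (i mod n) = 0"
    by (auto simp: coeff_eq_0)
qed

lemma red_add: "red n (p + q) = red n p + red n q"
proof -
  define N where "N = Suc (max (degree p) (degree q))"
  have "degree (p + q) < N" unfolding N_def using degree_add_le_max[of p q] by simp
  moreover have "degree p < N" "degree q < N" unfolding N_def by simp_all
  ultimately show ?thesis
    by (simp add: red_alt[where N = N] sum.distrib add_monom[symmetric])
qed

lemma red_smult: "red n (smult c p) = smult c (red n p)"
proof -
  define N where "N = Suc (degree p)"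
  have 1: "red n (smult c p) = (\<Sum>i<N. monom (coeff (smult c p) i) (i mod n))"
    by (rule red_alt) (use degree_smult_le[of c p] in \<open>simp add: N_def\<close>)
  have 2: "red n p = (\<Sum>i<N. monom (coeff p i) (i mod n))"
    by (rule red_alt) (simp add: N_def)
  show ?thesis by (simp only: 1 2 smult_sum_right smult_monom coeff_smult)
qed

lemma red_zero[simp]: "red n 0 = 0"
  by (simp add: red_def)

lemma red_uminus: "red n (- p) = - red n p"
  using red_smult[of n "-1" p] by simp

lemma red_diff: "red n (p - q) = red n p - red n q"
  using red_add[of n p "- q"] red_uminus[of n q] by simp

lemma red_sum: "red n (\<Sum>i\<in>S. f i) = (\<Sum>i\<in>S. red n (f i))"
  by (induction S rule: infinite_finite_induct) (simp_all add: red_add)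

lemma red_monom: "red n (monom a i) = monom a (i mod n)"
proof -
  have "red n (monom a i) = (\<Sum>j<Suc i. monom (coeff (monom a i) j) (j mod n))"
    by (rule red_alt) (simp add: le_less_trans[OF degree_monom_le])
  also have "\<dots> = (\<Sum>j<Suc i. if j = i then monom a (i mod n) else 0)"
    by (rule sum.cong) auto
  also have "\<dots> = monom a (i mod n)" by simp
  finally show ?thesis .
qed

lemma red_const_mult: "red n ([:c:] * p) = [:c:] * red n p"
  by (simp add: red_smult)

lemma red_of_int_mult: "red n (of_int z * p) = of_int z * red n p"
  by (simp add: of_int_poly red_smult)

lemma red_of_nat_mult: "red n (of_nat z * p) = of_nat z * red n p"
  by (simp add: of_nat_poly red_smult)

lemma red_monom_mult: "red n (monom a i * (q :: 'a::comm_ring_1 poly)) = red n (monom a (i mod n) * q)"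
proof -
  have q: "q = (\<Sum>j\<le>degree q. monom (coeff q j) j)" by (simp add: poly_as_sum_of_monoms)
  have "red n (monom a k * q) = (\<Sum>j\<le>degree q. monom (a * coeff q j) ((k + j) mod n))" for k
    by (subst q) (simp add: sum_distrib_left mult_monom red_sum red_monom)
  then show ?thesis by (simp add: mod_add_left_eq)
qed

lemma red_mult: "red n (red n p * q) = red n (p * q)"
proof -
  have "red n (red n p * q) = (\<Sum>i\<le>degree p. red n (monom (coeff p i) (i mod n) * q))"
    unfolding red_def[of n p] by (simp add: sum_distrib_right red_sum)
  also have "\<dots> = (\<Sum>i\<le>degree p. red n (monom (coeff p i) i * q))"
    by (simp add: red_monom_mult[symmetric])
  also have "\<dots> = red n ((\<Sum>i\<le>degree p. monom (coeff p i) i) * q)"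
    by (simp add: sum_distrib_right red_sum)
  also have "\<dots> = red n (p * q)" by (simp add: poly_as_sum_of_monoms)
  finally show ?thesis .
qed

lemma red_mult2: "red n (p * red n q) = red n (p * q)"
  using red_mult[of n q p] by (simp add: mult.commute)

lemma red_idem: "red n (red n p) = red n p"
  using red_mult[of n p 1] by simp

lemma red_in_Acar: "0 < n \<Longrightarrow> red n p \<in> Acar n"
  unfolding Acar_def
proof (intro CollectI allI impI)
  fix i assume n: "0 < n" and i: "n \<le> i"
  have "coeff (red n p) i = (\<Sum>ia\<le>degree p. coeff (monom (coeff p ia) (ia mod n)) i)"
    by (simp add: red_def coeff_sum)
  also have "\<dots> = 0"
  proof (rule sum.neutral, intro ballI)
    fix ia
    have "ia mod n < n" using n by simp
    then show "coeff (monom (coeff p ia) (ia mod n)) i = 0" using i by simp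
  qed
  finally show "coeff (red n p) i = 0" .
qed

lemma Acar_degree:
  assumes "p \<in> Acar n" "p \<noteq> 0" shows "degree p < n"
proof (rule ccontr)
  assume "\<not> degree p < n"
  then have "coeff p (degree p) = 0" using assms(1) by (simp add: Acar_def)
  then show False using assms(2) by simp
qed

lemma red_Acar: "p \<in> Acar n \<Longrightarrow> red n p = p"
proof (cases "p = 0")
  case True then show ?thesis by simp
next
  case False
  assume A: "p \<in> Acar n"
  have d: "degree p < n" using Acar_degree[OF A False] .
  have "red n p = (\<Sum>i\<le>degree p. monom (coeff p i) i)"
    unfolding red_def by (rule sum.cong) (use d in auto)
  then show ?thesis by (simp add: poly_as_sum_of_monoms)
qed

lemma Acar_iff_red:
  assumes "0 < n" shows "p \<in> Acar n \<longleftrightarrow> red n p = p"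
proof
  assume "p \<in> Acar n" then show "red n p = p" by (rule red_Acar)
next
  assume "red n p = p" then show "p \<in> Acar n" using red_in_Acar[OF assms, of p] by simp
qed

lemma red_monom_cong: "a mod n = b mod n \<Longrightarrow> red n (p * monom c a) = red n (p * monom c b)"
  using red_monom_mult[of n c a p] red_monom_mult[of n c b p] by (simp add: mult.commute)

lemma sig_eq: "sig n i = monom 1 (i mod n)" by (simp add: sig_def)

lemma red_sig: "red n (p * sig n i) = red n (p * monom 1 i)"
  unfolding sig_eq by (rule red_monom_cong) simp

lemma rot_back:
  assumes "p \<in> Acar n" "(a + b) mod n = 0"
  shows "red n (red n (p * monom 1 a) * monom 1 b) = p"
proof -
  have "red n (red n (p * monom 1 a) * monom 1 b) = red n (p * monom 1 (a + b))"
    by (simp add: red_mult mult_monom mult.assoc)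
  also have "\<dots> = red n (p * monom 1 0)" by (rule red_monom_cong) (simp add: assms(2))
  also have "\<dots> = p" using assms(1) by (simp add: red_Acar monom_0 one_pCons[symmetric])
  finally show ?thesis .
qed


declare Suc_0_mod_eq[simp del]

lemma idx_iff: "g \<in> idx n k \<longleftrightarrow> length g = k \<and> (\<forall>v\<in>set g. v < n)"
  by (auto simp: idx_def)

lemma idx_tl: "g \<in> idx n (Suc k) \<Longrightarrow> tl g \<in> idx n k"
  by (cases g) (auto simp: idx_def)

lemma idx_butlast: "g \<in> idx n (Suc k) \<Longrightarrow> butlast g \<in> idx n k"
  by (auto simp: idx_def dest: in_set_butlastD)

lemma idx_merge:
  assumes "g \<in> idx n (Suc k)" "1 \<le> j" "j \<le> k" "0 < n"
  shows "merge n j g \<in> idx n k"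
  using assms unfolding idx_def merge_def
  by (auto dest: in_set_takeD in_set_dropD)

lemma drop_split2:
  assumes "1 \<le> j" "j < length g"
  shows "drop (j - 1) g = g ! (j - 1) # g ! j # drop (j + 1) g"
proof -
  have "drop (j - 1) g = g ! (j - 1) # drop j g"
    using assms Cons_nth_drop_Suc[of "j - 1" g] by simp
  also have "drop j g = g ! j # drop (j + 1) g"
    using assms Cons_nth_drop_Suc[of j g] by simp
  finally show ?thesis .
qed

lemma sum_list_merge:
  assumes "1 \<le> j" "j < length g"
  shows "sum_list (merge n j g) mod n = sum_list g mod n"
proof -
  have g: "g = take (j - 1) g @ g ! (j - 1) # g ! j # drop (j + 1) g"
    using drop_split2[OF assms] append_take_drop_id[of "j - 1" g] by simp
  have "sum_list g = sum_list (take (j - 1) g) + (g ! (j - 1) + g ! j) + sum_list (drop (j + 1) g)"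
    by (subst g) simp
  then show ?thesis unfolding merge_def
    by (simp add: mod_add_left_eq mod_add_right_eq add.assoc)
       (metis mod_add_left_eq mod_add_right_eq add.assoc)
qed

lemma red_neg1_pow: "red n ((-1) ^ j * p) = (-1) ^ j * red n p"
  by (cases "even j") (simp_all add: red_uminus)

lemma idx_nonempty: "g \<in> idx n (Suc k) \<Longrightarrow> g \<noteq> []"
  by (auto simp: idx_def)

lemma Acar_0[simp]: "0 \<in> Acar n" by (simp add: Acar_def)

lemma red_sig_left: "red n (sig n i * p) = red n (monom 1 i * p)"
  using red_sig[of n p i] by (simp add: mult.commute)

context cyc
begin

definition hrep :: "nat \<Rightarrow> (nat list \<Rightarrow> 'a::comm_ring_1 poly) \<Rightarrow> nat list \<Rightarrow> 'a poly" where
  "hrep k \<phi> g = (if g \<in> idx n k then red n (\<phi> g * monom 1 (sum_list g)) else 0)"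

definition ginv :: "nat \<Rightarrow> (nat list \<Rightarrow> 'a::comm_ring_1 poly) \<Rightarrow> nat list \<Rightarrow> 'a poly" where
  "ginv k f g = (if g \<in> idx n k then red n (f g * monom 1 (n - sum_list g mod n)) else 0)"

lemma hrep_cochain: "hrep k \<phi> \<in> cochains n k"
  unfolding cochains_def by (auto simp: hrep_def red_in_Acar[OF npos])

lemma ginv_Acar: "ginv k f g \<in> Acar n"
  by (auto simp: ginv_def red_in_Acar[OF npos])

lemma ginv_zero: "length g \<noteq> k \<Longrightarrow> ginv k f g = 0"
  by (simp add: ginv_def idx_def)

lemma mod_back: "(n - s mod n + s) mod n = 0"
proof -
  have "s mod n < n" using npos by simp
  then have "n - s mod n + s = n + (s - s mod n)" by simp
  also have "s - s mod n = n * (s div n)" by (simp add: minus_mod_eq_mult_div)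
  finally show ?thesis by simp
qed

lemma mod_back': "(s + (n - s mod n)) mod n = 0"
  using mod_back[of s] by (simp add: add.commute)

lemma hrep_ginv: "f \<in> cochains n k \<Longrightarrow> hrep k (ginv k f) = f"
proof (rule ext)
  fix g assume f: "f \<in> cochains n k"
  show "hrep k (ginv k f) g = f g"
  proof (cases "g \<in> idx n k")
    case True
    have "f g \<in> Acar n" using f by (simp add: cochains_def)
    then show ?thesis using True
      by (simp add: hrep_def ginv_def rot_back mod_back)
  next
    case False then show ?thesis using f by (simp add: hrep_def cochains_def)
  qed
qed

lemma ginv_hrep: "\<phi> g \<in> Acar n \<Longrightarrow> g \<in> idx n k \<Longrightarrow> ginv k (hrep k \<phi>) g = \<phi> g"
  by (simp add: hrep_def ginv_def rot_back[OF _ mod_back'])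

lemma hrep_inj:
  assumes "\<phi> g \<in> Acar n" "\<psi> g \<in> Acar n"
    "red n (\<phi> g * monom 1 s) = red n (\<psi> g * monom 1 s)"
  shows "\<phi> g = \<psi> g"
proof -
  have "\<phi> g = red n (red n (\<phi> g * monom 1 s) * monom 1 (n - s mod n))"
    using assms(1) by (simp add: rot_back[OF _ mod_back'])
  also have "\<dots> = \<psi> g" using assms(2,3) by (simp add: rot_back[OF _ mod_back'])
  finally show ?thesis .
qed

lemma hoch_trans:
  assumes g: "g \<in> idx n (Suc k)"
  shows "hoch_d n k (hrep k \<phi>) g = red n (gdelta k \<phi> g * monom 1 (sum_list g))"
proof -
  define M where "M = (monom 1 (sum_list g) :: 'a poly)"
  obtain a r where gar: "g = a # r" using idx_nonempty[OF g] by (cases g) auto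
  have t1: "red n (sig n (hd g) * hrep k \<phi> (tl g)) = red n (\<phi> (tl g) * M)"
  proof -
    have "red n (sig n (hd g) * hrep k \<phi> (tl g)) = red n (sig n a * red n (\<phi> r * monom 1 (sum_list r)))"
      using idx_tl[OF g] by (simp add: hrep_def gar)
    also have "\<dots> = red n (\<phi> r * monom 1 (sum_list r) * monom 1 a)"
      by (simp add: red_mult2 red_sig_left mult.commute)
    also have "\<dots> = red n (\<phi> (tl g) * M)"
      by (simp add: M_def gar mult.assoc mult_monom add.commute)
    finally show ?thesis .
  qed
  have t2: "hrep k \<phi> (merge n j g) = red n (\<phi> (merge n j g) * M)" if j: "j \<in> {1..k}" for j
  proof -
    have mi: "merge n j g \<in> idx n k" using j g by (intro idx_merge npos) auto
    have lg: "length g = Suc k" using g by (simp add: idx_def)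
    show ?thesis using mi unfolding hrep_def M_def
      by (simp, intro red_monom_cong sum_list_merge) (use j lg in auto)
  qed
  have t3: "red n (hrep k \<phi> (butlast g) * sig n (last g)) = red n (\<phi> (butlast g) * M)"
  proof -
    have bl: "butlast g \<in> idx n k" using idx_butlast[OF g] .
    have sg: "sum_list g = sum_list (butlast g) + last g"
      using idx_nonempty[OF g] by (metis append_butlast_last_id sum_list_append sum_list_simps(1,2) add_0_right)
    have "red n (hrep k \<phi> (butlast g) * sig n (last g))
        = red n (red n (\<phi> (butlast g) * monom 1 (sum_list (butlast g))) * monom 1 (last g))"
      using bl by (simp add: hrep_def red_sig)
    also have "\<dots> = red n (\<phi> (butlast g) * M)"
      by (simp add: red_mult M_def sg mult.assoc mult_monom)
    finally show ?thesis .
  qed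
  have "hoch_d n k (hrep k \<phi>) g = red n (\<phi> (tl g) * M)
      + (\<Sum>j\<in>{1..k}. (-1)^j * red n (\<phi> (merge n j g) * M))
      + (-1)^(Suc k) * red n (\<phi> (butlast g) * M)"
    using g by (simp add: hoch_d_def t1 t2 t3)
  also have "\<dots> = red n (gdelta k \<phi> g * M)"
    by (simp add: gdelta_def ring_distribs red_add red_sum sum_distrib_right red_neg1_pow mult.assoc
        del: power_Suc)
  finally show ?thesis by (simp add: M_def)
qed

end


declare Suc_0_mod_eq[simp del]

lemma Acar_add: "p \<in> Acar n \<Longrightarrow> q \<in> Acar n \<Longrightarrow> p + q \<in> Acar n"
  by (simp add: Acar_def)
lemma Acar_uminus: "p \<in> Acar n \<Longrightarrow> - p \<in> Acar n"
  by (simp add: Acar_def)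
lemma Acar_diff: "p \<in> Acar n \<Longrightarrow> q \<in> Acar n \<Longrightarrow> p - q \<in> Acar n"
  by (simp add: Acar_def)
lemma Acar_smult: "p \<in> Acar n \<Longrightarrow> smult c p \<in> Acar n"
  by (simp add: Acar_def)
lemma Acar_of_int_mult: "p \<in> Acar n \<Longrightarrow> of_int z * p \<in> Acar n"
  by (simp add: of_int_poly Acar_smult)
lemma Acar_neg1_mult: "p \<in> Acar n \<Longrightarrow> (-1) ^ j * p \<in> Acar n"
  by (cases "even j") (simp_all add: Acar_uminus)
lemma Acar_sum: "(\<And>i. i \<in> S \<Longrightarrow> f i \<in> Acar n) \<Longrightarrow> (\<Sum>i\<in>S. f i) \<in> Acar n"
  by (induction S rule: infinite_finite_induct) (simp_all add: Acar_add)

lemma red_one: "red n (1 :: 'a::comm_ring_1 poly) = 1"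
proof -
  have m: "monom (1::'a) 0 = 1" by (simp add: monom_0 one_pCons)
  have "red n (monom (1::'a) 0) = monom 1 0" by (simp only: red_monom) simp
  then show ?thesis by (simp only: m)
qed

context cyc
begin

lemma hrep_cong: "(\<And>g. g \<in> idx n k \<Longrightarrow> \<phi> g = \<psi> g) \<Longrightarrow> hrep k \<phi> = hrep k \<psi>"
  by (rule ext) (simp add: hrep_def)

lemma hrep_diff: "(\<lambda>g. hrep k \<phi> g - hrep k \<psi> g) = hrep k (\<lambda>g. \<phi> g - \<psi> g)"
  by (rule ext) (simp add: hrep_def ring_distribs red_diff)

lemma hrep_smult: "(\<lambda>g. smult c (hrep k \<phi> g)) = hrep k (\<lambda>g. smult c (\<phi> g))"
  by (rule ext) (simp add: hrep_def red_smult)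

lemma hrep_sum: "(\<lambda>g. \<Sum>i\<in>S. hrep k (F i) g) = hrep k (\<lambda>g. \<Sum>i\<in>S. F i g)"
  by (rule ext) (simp add: hrep_def sum_distrib_right red_sum)

lemma idx_take_drop:
  assumes "g \<in> idx n (k + l)"
  shows "take k g \<in> idx n k" "drop k g \<in> idx n l"
  using assms by (auto simp: idx_def dest: in_set_takeD in_set_dropD)

lemma cup_hrep:
  "cup n k l (hrep k \<phi>) (hrep l \<psi>) = hrep (k + l) (\<lambda>g. \<phi> (take k g) * \<psi> (drop k g))"
proof (rule ext)
  fix g
  show "cup n k l (hrep k \<phi>) (hrep l \<psi>) g = hrep (k + l) (\<lambda>g. \<phi> (take k g) * \<psi> (drop k g)) g"
  proof (cases "g \<in> idx n (k + l)")
    case True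
    have s: "sum_list g = sum_list (take k g) + sum_list (drop k g)"
      by (metis append_take_drop_id sum_list_append)
    have e: "\<phi> (take k g) * monom 1 (sum_list (take k g)) * (\<psi> (drop k g) * monom 1 (sum_list (drop k g)))
      = \<phi> (take k g) * \<psi> (drop k g) * (monom 1 (sum_list (take k g)) * monom 1 (sum_list (drop k g)))"
      by (simp add: ac_simps)
    have "red n (red n (\<phi> (take k g) * monom 1 (sum_list (take k g))) * red n (\<psi> (drop k g) * monom 1 (sum_list (drop k g))))
        = red n (\<phi> (take k g) * \<psi> (drop k g) * monom 1 (sum_list g))"
      by (simp only: red_mult red_mult2 e mult_monom s) simp
    then show ?thesis using True idx_take_drop[OF True]
      by (simp add: cup_def hrep_def)
  next
    case False then show ?thesis by (simp add: cup_def hrep_def)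
  qed
qed

lemma hrep0: "hrep 0 \<phi> = (\<lambda>g. if g = [] then red n (\<phi> []) else 0)"
  by (rule ext) (simp add: hrep_def idx_def)

lemma sig_red: "sig n i = red n (monom 1 i)"
  by (simp add: sig_eq red_monom)

lemma gx_hrep: "gx n = hrep 0 (\<lambda>_. monom 1 1)"
  by (rule ext) (simp add: hrep0 gx_def sig_red)

lemma cone_hrep: "(cone :: nat list \<Rightarrow> 'a::comm_ring_1 poly) = hrep 0 (\<lambda>_. 1)"
  by (rule ext) (simp add: hrep0 cone_def red_one)

lemma cpow_gx: "cpow n 0 (gx n) i = (hrep 0 (\<lambda>_. monom 1 i) :: nat list \<Rightarrow> 'a::comm_ring_1 poly)"
proof (induction i)
  case 0 then show ?case by (simp add: cone_hrep monom_0 one_pCons)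
next
  case (Suc i)
  have "cpow n 0 (gx n) (Suc i) = (cup n 0 0 (hrep 0 (\<lambda>_. monom 1 1)) (hrep 0 (\<lambda>_. monom 1 i))
        :: nat list \<Rightarrow> 'a poly)"
    unfolding cpow.simps Suc.IH by (simp add: gx_hrep)
  also have "\<dots> = hrep 0 (\<lambda>_. monom 1 (Suc i))"
    by (simp add: cup_hrep mult_monom)
  finally show ?case .
qed

definition phy :: "nat list \<Rightarrow> 'a::comm_ring_1 poly" where
  "phy g = of_nat (hd g) * monom 1 (n - 1)"

definition car2 :: "nat \<Rightarrow> nat \<Rightarrow> int" where
  "car2 a b = (if n \<le> a + b then 1 else 0)"

definition phz :: "nat list \<Rightarrow> 'a::comm_ring_1 poly" where
  "phz g = of_int (car2 (g ! 0) (g ! 1))"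

lemma gy_hrep: "gy n = (hrep 1 phy :: nat list \<Rightarrow> 'a::comm_ring_1 poly)"
proof (rule ext)
  fix g
  show "gy n g = (hrep 1 phy g :: 'a poly)"
  proof (cases "g \<in> idx n 1")
    case True
    then obtain a where g: "g = [a]" by (auto simp: idx_def length_Suc_conv)
    have "red n (of_nat a * monom 1 (n - 1) * monom 1 a) = (of_nat a * sig n (a + n - 1) :: 'a poly)"
      using npos by (simp add: red_of_nat_mult mult.assoc mult_monom red_monom sig_eq add.commute)
    then show ?thesis using True by (simp add: gy_def hrep_def phy_def g)
  next
    case False then show ?thesis by (simp add: gy_def hrep_def)
  qed
qed

lemma gz_hrep: "gz n = (hrep 2 phz :: nat list \<Rightarrow> 'a::comm_ring_1 poly)"
proof (rule ext)
  fix g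
  show "gz n g = (hrep 2 phz g :: 'a poly)"
  proof (cases "g \<in> idx n 2")
    case True
    then obtain a b where g: "g = [a, b]" by (auto simp: idx_def length_Suc_conv numeral_2_eq_2)
    show ?thesis using True
      by (simp add: gz_def hrep_def phz_def g car2_def red_monom sig_eq)
  next
    case False then show ?thesis by (simp add: gz_def hrep_def)
  qed
qed

fun Wi :: "nat list \<Rightarrow> int" where
  "Wi (a # b # r) = car2 a b * Wi r"
| "Wi _ = 1"

lemma cpow_gz: "cpow n 2 (gz n) k = (hrep (2 * k) (\<lambda>g. of_int (Wi g)) :: nat list \<Rightarrow> 'a::comm_ring_1 poly)"
proof (induction k)
  case 0
  have "hrep 0 (\<lambda>g. of_int (Wi g)) = (hrep 0 (\<lambda>_. 1) :: nat list \<Rightarrow> 'a poly)"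
    by (rule hrep_cong) (simp add: idx_def)
  then show ?case by (simp add: cone_hrep)
next
  case (Suc k)
  have "cpow n 2 (gz n) (Suc k) = (cup n 2 (2 * k) (hrep 2 phz) (hrep (2 * k) (\<lambda>g. of_int (Wi g)))
        :: nat list \<Rightarrow> 'a poly)"
    unfolding cpow.simps Suc.IH by (simp add: gz_hrep)
  also have "\<dots> = hrep (2 * Suc k) (\<lambda>g. of_int (Wi g))"
    unfolding cup_hrep mult_Suc_right
  proof (rule hrep_cong)
    fix g assume g: "g \<in> idx n (2 + 2 * k)"
    then obtain a b r where "g = a # b # r" by (auto simp: idx_def length_Suc_conv)
    then show "phz (take 2 g) * of_int (Wi (drop 2 g)) = (of_int (Wi g) :: 'a poly)"
      by (simp add: phz_def)
  qed
  finally show ?case .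
qed

lemma cpow_gy0: "cpow n 1 (gy n) 0 = (hrep 0 (\<lambda>_. 1) :: nat list \<Rightarrow> 'a::comm_ring_1 poly)"
  by (simp add: cone_hrep)

lemma cpow_gy1: "cpow n 1 (gy n) 1 = (hrep 1 phy :: nat list \<Rightarrow> 'a::comm_ring_1 poly)"
proof -
  have "cpow n 1 (gy n) 1 = (cup n 1 0 (hrep 1 phy) (hrep 0 (\<lambda>_. 1)) :: nat list \<Rightarrow> 'a poly)"
    by (simp add: gy_hrep cone_hrep)
  also have "\<dots> = hrep 1 phy" unfolding cup_hrep by (simp, rule hrep_cong, auto simp: idx_def)
  finally show ?thesis .
qed

end


declare Suc_0_mod_eq[simp del]

lemma coeff_sum_monom_lt: "coeff (\<Sum>i<N. monom (c i) i) j = (if j < N then c j else 0)"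
  by (simp add: coeff_sum)

lemma Acar_sum_monom: "0 < n \<Longrightarrow> P \<in> Acar n \<Longrightarrow> (\<Sum>i<n. monom (coeff P i) i) = P"
  by (rule poly_eqI) (simp add: coeff_sum_monom_lt Acar_def)

lemma Acar_sum_monom': "(\<Sum>i<n. monom (c i) i) \<in> Acar n"
  by (simp add: Acar_def coeff_sum_monom_lt)

context cyc
begin

definition wI :: "nat list \<Rightarrow> int" where
  "wI g = wh (iota_from 0 g)"

definition te :: "nat \<Rightarrow> nat" where
  "te e = (if e = 1 then n - 1 else 0)"

lemma nth0_iota[simp]: "iota_from a g ! 0 = a"
  by (cases g) simp_all

lemma W_3_iota: "W (a # b # iota_from c g) = car3 a b c * W (iota_from c g)"
  by (cases g) simp_all

lemma W_iota: "(\<forall>v\<in>set g. v < n) \<Longrightarrow> W (iota_from a g) = Wi g"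
proof (induction g arbitrary: a rule: Wi.induct)
  case (1 u v r)
  have c: "car3 a ((a + u) mod n) (((a + u) mod n + v) mod n) = car2 u v"
    using 1(2) dif_from[of a u] dif_from[of "(a + u) mod n" v]
    by (simp add: car3_def car2_def)
  show ?case using 1 by (simp add: W_3_iota c)
qed simp_all

lemma wI_even: "g \<in> idx n d \<Longrightarrow> even d \<Longrightarrow> wI g = Wi g"
  by (simp add: wI_def wh_odd idx_iff W_iota)

lemma wI_odd:
  assumes "g \<in> idx n d" "odd d"
  shows "wI g = int (hd g) * Wi (tl g)"
proof -
  obtain u r where g: "g = u # r" using assms by (cases g) (auto simp: idx_def)
  have u: "u < n" and r: "\<forall>v\<in>set r. v < n" and lr: "even (length r)"
    using assms by (auto simp: idx_def g)
  have "wI g = int (dif 0 u) * W (iota_from u r)"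
    using wh_even[of "iota_from 0 g" "length r"] lr u by (simp add: wI_def g)
  then show ?thesis using u r by (simp add: dif_0 W_iota g)
qed

lemma mono_hrep:
  assumes "e \<le> 1"
  shows "mono n i e k = (hrep (e + 2 * k) (\<lambda>g. monom 1 i * of_int (wI g) * monom 1 (te e))
          :: nat list \<Rightarrow> 'a::comm_ring_1 poly)"
proof (cases "e = 0")
  case True
  have "mono n i e k = (cup n 0 (2 * k) (hrep 0 (\<lambda>_. monom 1 i))
          (cup n 0 (2 * k) (hrep 0 (\<lambda>_. 1)) (hrep (2 * k) (\<lambda>g. of_int (Wi g)))) :: nat list \<Rightarrow> 'a poly)"
    unfolding mono_def True by (simp add: cpow_gx cpow_gz cone_hrep)
  also have "\<dots> = hrep (2 * k) (\<lambda>g. monom 1 i * of_int (Wi g))"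
    by (simp add: cup_hrep)
  also have "\<dots> = hrep (e + 2 * k) (\<lambda>g. monom 1 i * of_int (wI g) * monom 1 (te e))"
    unfolding True
    by (simp, rule hrep_cong) (simp add: wI_even te_def monom_0 one_pCons[symmetric])
  finally show ?thesis .
next
  case False
  then have e: "e = 1" using assms by simp
  have "mono n i e k = (cup n 0 (1 + 2 * k) (hrep 0 (\<lambda>_. monom 1 i))
          (cup n 1 (2 * k) (hrep 1 phy) (hrep (2 * k) (\<lambda>g. of_int (Wi g)))) :: nat list \<Rightarrow> 'a poly)"
    unfolding mono_def e cpow_gx cpow_gz cpow_gy1 by simp
  also have "\<dots> = hrep (0 + (1 + 2 * k)) (\<lambda>g. monom 1 i * (phy (take 1 (drop 0 g)) * of_int (Wi (drop 1 (drop 0 g)))))"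
    unfolding cup_hrep[of 1 "2 * k"] by (rule cup_hrep)
  also have "\<dots> = hrep (e + 2 * k) (\<lambda>g. monom 1 i * of_int (wI g) * monom 1 (te e))"
    unfolding e add_0
  proof (rule hrep_cong)
    fix g :: "nat list" assume g': "g \<in> idx n (1 + 2 * k)"
    then obtain u r where gu: "g = u # r" by (cases g) (auto simp: idx_def)
    have "wI g = int u * Wi r" using wI_odd[OF g'] by (simp add: gu)
    then show "monom 1 i * (phy (take 1 (drop 0 g)) * of_int (Wi (drop 1 (drop 0 g)))) =
         (monom 1 i * of_int (wI g) * monom 1 (te 1) :: 'a poly)"
      by (simp add: gu phy_def te_def ac_simps)
  qed
  finally show ?thesis .
qed

lemma csum_mono:
  assumes "e \<le> 1"
  shows "csum {..<n} (\<lambda>i. csmult (c i) (mono n i e k)) =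
     (hrep (e + 2 * k) (\<lambda>g. (\<Sum>i<n. monom (c i) i) * of_int (wI g) * monom 1 (te e))
       :: nat list \<Rightarrow> 'a::comm_ring_1 poly)"
proof -
  have "csum {..<n} (\<lambda>i. csmult (c i) (mono n i e k)) =
     (\<lambda>g. \<Sum>i<n. smult (c i) (hrep (e + 2 * k) (\<lambda>g. monom 1 i * of_int (wI g) * monom 1 (te e)) g)
        :: 'a poly)"
    by (rule ext) (simp add: csum_def csmult_def mono_hrep[OF assms])
  also have "\<dots> = hrep (e + 2 * k) (\<lambda>g. \<Sum>i<n. smult (c i) (monom 1 i * of_int (wI g) * monom 1 (te e)))"
  proof (rule ext)
    fix g
    show "(\<Sum>i<n. smult (c i) (hrep (e + 2 * k) (\<lambda>g. monom 1 i * of_int (wI g) * monom 1 (te e)) g))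
        = hrep (e + 2 * k) (\<lambda>g. \<Sum>i<n. smult (c i) (monom 1 i * of_int (wI g) * monom 1 (te e))) g"
      by (cases "g \<in> idx n (e + 2 * k)") (simp_all add: hrep_def red_smult red_sum sum_distrib_right)
  qed
  also have "\<dots> = hrep (e + 2 * k) (\<lambda>g. (\<Sum>i<n. monom (c i) i) * of_int (wI g) * monom 1 (te e))"
    by (simp add: sum_distrib_right smult_monom_mult mult.assoc)
  finally show ?thesis .
qed

end


declare Suc_0_mod_eq[simp del]

lemma hoch_d_diff: "hoch_d n k (\<lambda>x. u x - v x) = (\<lambda>x. hoch_d n k u x - hoch_d n k v x)"
  by (rule ext) (simp add: hoch_d_def red_diff ring_distribs sum_subtractf)

lemma cochains_diff: "u \<in> cochains n k \<Longrightarrow> v \<in> cochains n k \<Longrightarrow> (\<lambda>x. u x - v x) \<in> cochains n k"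
  by (simp add: cochains_def Acar_diff)

context cyc
begin

lemma rot_inj:
  assumes "X \<in> Acar n" "Y \<in> Acar n" "red n (X * monom 1 s) = red n (Y * monom 1 s)"
  shows "X = Y"
  using hrep_inj[of "\<lambda>_. X" "[]" "\<lambda>_. Y" s] assms by simp

lemma gdelta_Acar: "(\<And>h. \<psi> h \<in> Acar n) \<Longrightarrow> gdelta k \<psi> g \<in> Acar n"
  unfolding gdelta_def by (intro Acar_add Acar_sum Acar_neg1_mult) auto

lemma red_gdelta:
  assumes g: "g \<in> idx n (Suc k)"
  shows "red n (gdelta k \<chi> g) = gdelta k (\<lambda>h. if h \<in> idx n k then red n (\<chi> h) else 0) g"
proof -
  have m: "merge n j g \<in> idx n k" if "j \<in> {1..k}" for j
    using that g by (intro idx_merge npos) auto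
  show ?thesis
    unfolding gdelta_def using idx_tl[OF g] idx_butlast[OF g] m
    by (simp add: red_add red_sum red_neg1_pow del: power_Suc)
qed

lemma hoch_d_hrep: "hoch_d n k (hrep k \<phi>) = hrep (Suc k) (gdelta k \<phi>)"
proof (rule ext)
  fix g
  show "hoch_d n k (hrep k \<phi>) g = hrep (Suc k) (gdelta k \<phi>) g"
  proof (cases "g \<in> idx n (Suc k)")
    case True then show ?thesis by (simp add: hoch_trans hrep_def)
  next
    case False then show ?thesis by (simp add: hoch_d_def hrep_def)
  qed
qed

lemma te_le: "te e \<le> n" by (simp add: te_def)

lemma te_back: "(n - te e + te e) mod n = 0"
  using te_le[of e] by simp

lemma wI_Nil: "wI [] = 1"
  using wI_even[of "[]" 0] by (simp add: idx_def)

lemma de: "d mod 2 + 2 * (d div 2) = (d::nat)" by simp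
lemma e_le: "d mod 2 \<le> (1::nat)" by simp

lemma basis_exist:
  assumes f: "f \<in> (cocycles n d :: (nat list \<Rightarrow> 'a::comm_ring_1 poly) set)"
  shows "\<exists>c::nat \<Rightarrow> 'a. (\<forall>i\<ge>n. c i = 0) \<and>
           cohom n d f (csum {..<n} (\<lambda>i. csmult (c i) (mono n i (d mod 2) (d div 2))))"
proof -
  define e where "e = d mod 2"
  define T where "T = te e"
  have fc: "f \<in> cochains n d" using f by (simp add: cocycles_def)
  define \<phi> where "\<phi> = ginv d f"
  have f\<phi>: "hrep d \<phi> = f" unfolding \<phi>_def by (rule hrep_ginv[OF fc])
  have \<phi>A: "\<phi> g \<in> Acar n" for g unfolding \<phi>_def by (rule ginv_Acar)
  have csum_eq: "csum {..<n} (\<lambda>i. csmult (c i) (mono n i (d mod 2) (d div 2)))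
      = hrep d (\<lambda>g. (\<Sum>i<n. monom (c i) i) * of_int (wI g) * monom 1 T)" for c :: "nat \<Rightarrow> 'a"
    using csum_mono[of "d mod 2" c "d div 2"] e_le[of d] by (simp add: T_def e_def)
  show ?thesis
  proof (cases "d = 0")
    case True
    define P where "P = \<phi> []"
    define c where "c i = (if i < n then coeff P i else 0)" for i
    have Pc: "(\<Sum>i<n. monom (c i) i) = P"
      using Acar_sum_monom[OF npos \<phi>A[of "[]"]] by (simp add: c_def P_def)
    have "csum {..<n} (\<lambda>i. csmult (c i) (mono n i (d mod 2) (d div 2))) = f"
      unfolding csum_eq Pc f\<phi>[symmetric]
      by (rule hrep_cong) (simp add: True idx_def T_def e_def te_def wI_Nil P_def monom_0 one_pCons[symmetric])
    then have "cohom n d f (csum {..<n} (\<lambda>i. csmult (c i) (mono n i (d mod 2) (d div 2))))"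
      by (simp add: cohom_def coboundaries_def True)
    moreover have "\<forall>i\<ge>n. c i = 0" by (simp add: c_def)
    ultimately show ?thesis by blast
  next
    case False
    then have d1: "1 \<le> d" by simp
    have dd: "Suc (d - 1) = d" using d1 by simp
    have cocyc: "gdelta d \<phi> g = 0" if "length g = Suc d" "\<forall>v\<in>set g. v < n" for g
    proof -
      have gi: "g \<in> idx n (Suc d)" using that by (simp add: idx_iff)
      have "hoch_d n d f g = 0" using f by (simp add: cocycles_def)
      then have "red n (gdelta d \<phi> g * monom 1 (sum_list g)) = red n (0 * monom 1 (sum_list g))"
        using hoch_trans[OF gi, of \<phi>] f\<phi> by simp
      then show ?thesis by (rule rot_inj[OF gdelta_Acar[OF \<phi>A] Acar_0])
    qed
    obtain \<chi> c0 where ex: "\<forall>g. length g = d \<longrightarrow> (\<forall>v\<in>set g. v < n) \<longrightarrow>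
            \<phi> g = of_int (wh (iota_from 0 g)) * c0 + gdelta (d - 1) \<chi> g"
      using group_exist[OF d1, of \<phi>] ginv_zero cocyc unfolding \<phi>_def by blast
    define cr where "cr = red n c0"
    define \<chi>' where "\<chi>' = (\<lambda>h. if h \<in> idx n (d - 1) then red n (\<chi> h) else 0)"
    have \<phi>eq: "\<phi> g = of_int (wI g) * cr + gdelta (d - 1) \<chi>' g" if g: "g \<in> idx n d" for g
    proof -
      have "\<phi> g = red n (\<phi> g)" using \<phi>A[of g] by (simp add: red_Acar)
      also have "\<dots> = red n (of_int (wI g) * c0 + gdelta (d - 1) \<chi> g)"
        using ex g by (simp add: idx_iff wI_def)
      also have "\<dots> = of_int (wI g) * cr + gdelta (d - 1) \<chi>' g"
        using red_gdelta[of g "d - 1" \<chi>] g dd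
        by (simp add: red_add red_of_int_mult cr_def \<chi>'_def)
      finally show ?thesis .
    qed
    have crA: "cr \<in> Acar n" unfolding cr_def by (rule red_in_Acar[OF npos])
    define P where "P = red n (cr * monom 1 (n - T))"
    have PA: "P \<in> Acar n" unfolding P_def by (rule red_in_Acar[OF npos])
    define c where "c i = (if i < n then coeff P i else 0)" for i
    have Pc: "(\<Sum>i<n. monom (c i) i) = P"
      using Acar_sum_monom[OF npos PA] by (simp add: c_def)
    have PT: "red n (P * monom 1 T) = cr"
      unfolding P_def by (rule rot_back[OF crA]) (simp add: T_def te_back)
    have "(\<lambda>is. f is - csum {..<n} (\<lambda>i. csmult (c i) (mono n i (d mod 2) (d div 2))) is)
        = hoch_d n (d - 1) (hrep (d - 1) \<chi>')"
    proof (rule ext)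
      fix g
      show "f g - csum {..<n} (\<lambda>i. csmult (c i) (mono n i (d mod 2) (d div 2))) g
          = hoch_d n (d - 1) (hrep (d - 1) \<chi>') g"
      proof (cases "g \<in> idx n d")
        case True
        define M where "M = (monom 1 (sum_list g) :: 'a poly)"
        have r: "P * of_int (wI g) * monom 1 T * M = of_int (wI g) * (P * monom 1 T * M)"
          by (simp add: ac_simps)
        have "red n (P * of_int (wI g) * monom 1 T * M) = of_int (wI g) * red n (red n (P * monom 1 T) * M)"
          by (simp only: r red_of_int_mult red_mult)
        also have "\<dots> = red n (of_int (wI g) * cr * M)" by (simp add: PT red_of_int_mult mult.assoc)
        finally have k: "red n (P * of_int (wI g) * monom 1 T * M) = red n (of_int (wI g) * cr * M)" .
        have "f g - csum {..<n} (\<lambda>i. csmult (c i) (mono n i (d mod 2) (d div 2))) g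
            = red n (\<phi> g * M) - red n (P * of_int (wI g) * monom 1 T * M)"
          unfolding csum_eq Pc f\<phi>[symmetric] using True by (simp add: hrep_def M_def)
        also have "\<dots> = red n (gdelta (d - 1) \<chi>' g * M)"
          unfolding k \<phi>eq[OF True] by (simp add: ring_distribs red_add)
        also have "\<dots> = hoch_d n (d - 1) (hrep (d - 1) \<chi>') g"
          unfolding hoch_d_hrep dd using True by (simp add: hrep_def M_def)
        finally show ?thesis .
      next
        case False
        then show ?thesis
          unfolding csum_eq hoch_d_hrep dd f\<phi>[symmetric] by (simp add: hrep_def)
      qed
    qed
    then have "cohom n d f (csum {..<n} (\<lambda>i. csmult (c i) (mono n i (d mod 2) (d div 2))))"
      unfolding cohom_def coboundaries_def using False hrep_cochain by auto
    moreover have "\<forall>i\<ge>n. c i = 0" by (simp add: c_def)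
    ultimately show ?thesis by blast
  qed
qed

lemma basis_unique:
  assumes char: "of_nat n = (0 :: 'a::comm_ring_1 poly)"
    and c1: "\<forall>i\<ge>n. c1 i = 0"
    and h1: "cohom n d f (csum {..<n} (\<lambda>i. csmult (c1 i) (mono n i (d mod 2) (d div 2))) :: nat list \<Rightarrow> 'a poly)"
    and c2: "\<forall>i\<ge>n. c2 i = 0"
    and h2: "cohom n d f (csum {..<n} (\<lambda>i. csmult (c2 i) (mono n i (d mod 2) (d div 2))))"
  shows "c1 = c2"
proof -
  define T where "T = te (d mod 2)"
  define P1 where "P1 = (\<Sum>i<n. monom (c1 i) i)"
  define P2 where "P2 = (\<Sum>i<n. monom (c2 i) i)"
  define S1 where "S1 = csum {..<n} (\<lambda>i. csmult (c1 i) (mono n i (d mod 2) (d div 2)))"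
  define S2 where "S2 = csum {..<n} (\<lambda>i. csmult (c2 i) (mono n i (d mod 2) (d div 2)))"
  have S1: "S1 = hrep d (\<lambda>g. P1 * of_int (wI g) * monom 1 T)"
    using csum_mono[of "d mod 2" c1 "d div 2"] e_le[of d] by (simp add: T_def S1_def P1_def)
  have S2: "S2 = hrep d (\<lambda>g. P2 * of_int (wI g) * monom 1 T)"
    using csum_mono[of "d mod 2" c2 "d div 2"] e_le[of d] by (simp add: T_def S2_def P2_def)
  define Pe where "Pe = P2 - P1"
  have PeA: "Pe \<in> Acar n" unfolding Pe_def P1_def P2_def by (intro Acar_diff Acar_sum_monom')
  define E where "E = red n (Pe * monom 1 T)"
  have EA: "E \<in> Acar n" unfolding E_def by (rule red_in_Acar[OF npos])
  have diffS: "(\<lambda>g. S2 g - S1 g) = hrep d (\<lambda>g. Pe * of_int (wI g) * monom 1 T)"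
    unfolding S1 S2 hrep_diff Pe_def by (simp add: algebra_simps)
  have val: "hrep d (\<lambda>g. Pe * of_int (wI g) * monom 1 T) g = red n (of_int (wI g) * E * monom 1 (sum_list g))"
    if "g \<in> idx n d" for g
  proof -
    have r: "Pe * of_int (wI g) * monom 1 T * monom 1 (sum_list g) = of_int (wI g) * (Pe * monom 1 T * monom 1 (sum_list g))"
      by (simp add: ac_simps)
    have r2: "of_int (wI g) * E * monom 1 (sum_list g) = of_int (wI g) * (E * monom 1 (sum_list g))"
      by (simp add: mult.assoc)
    show ?thesis using that unfolding hrep_def r2
      by (simp only: if_True r red_of_int_mult E_def red_mult)
  qed
  have E0: "E = 0"
  proof (cases "d = 0")
    case True
    have "f = S1" "f = S2" using h1 h2 True
      by (auto simp: cohom_def coboundaries_def S1_def S2_def fun_eq_iff)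
    then have z: "S2 [] - S1 [] = 0" by simp
    have "S2 [] - S1 [] = red n (of_int (wI []) * E * monom 1 (sum_list []))"
      using fun_cong[OF diffS, of "[]"] val[of "[]"] True by (simp add: idx_def)
    then have "red n E = 0" using z by (simp add: wI_Nil monom_0 one_pCons[symmetric])
    then show ?thesis using EA by (simp add: red_Acar)
  next
    case False
    then have d1: "1 \<le> d" by simp
    have dd: "Suc (d - 1) = d" using d1 by simp
    obtain u where u: "u \<in> cochains n (d - 1)" "(\<lambda>is. f is - S1 is) = hoch_d n (d - 1) u"
      using h1 False by (auto simp: cohom_def coboundaries_def S1_def)
    obtain v where v: "v \<in> cochains n (d - 1)" "(\<lambda>is. f is - S2 is) = hoch_d n (d - 1) v"
      using h2 False by (auto simp: cohom_def coboundaries_def S2_def)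
    define w where "w = (\<lambda>x. u x - v x)"
    have wc: "w \<in> cochains n (d - 1)" unfolding w_def by (rule cochains_diff[OF u(1) v(1)])
    define \<psi> where "\<psi> = ginv (d - 1) w"
    have w\<psi>: "hrep (d - 1) \<psi> = w" unfolding \<psi>_def by (rule hrep_ginv[OF wc])
    have \<psi>A: "\<psi> h \<in> Acar n" for h unfolding \<psi>_def by (rule ginv_Acar)
    have "(\<lambda>g. S2 g - S1 g) = hoch_d n (d - 1) w"
    proof -
      have "(\<lambda>g. S2 g - S1 g) = (\<lambda>g. (f g - S1 g) - (f g - S2 g))" by simp
      also have "\<dots> = (\<lambda>g. hoch_d n (d - 1) u g - hoch_d n (d - 1) v g)"
        using fun_cong[OF u(2)] fun_cong[OF v(2)] by simp
      also have "\<dots> = hoch_d n (d - 1) w" unfolding w_def by (simp add: hoch_d_diff)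
      finally show ?thesis .
    qed
    then have eqh: "hrep d (\<lambda>g. Pe * of_int (wI g) * monom 1 T) = hrep d (gdelta (d - 1) \<psi>)"
      unfolding diffS w\<psi>[symmetric] hoch_d_hrep dd .
    have "gdelta (d - 1) \<psi> g = of_int (wh (iota_from 0 g)) * E"
      if "length g = d" "\<forall>v\<in>set g. v < n" for g
    proof -
      have gi: "g \<in> idx n d" using that by (simp add: idx_iff)
      have "red n (gdelta (d - 1) \<psi> g * monom 1 (sum_list g)) = red n (of_int (wI g) * E * monom 1 (sum_list g))"
        using fun_cong[OF eqh, of g] val[OF gi] gi by (simp add: hrep_def)
      then have "gdelta (d - 1) \<psi> g = of_int (wI g) * E"
        by (rule rot_inj[OF gdelta_Acar[OF \<psi>A] Acar_of_int_mult[OF EA]])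
      then show ?thesis by (simp add: wI_def)
    qed
    then show "E = 0" by (rule group_unique[OF char d1])
  qed
  have "Pe = red n (red n (Pe * monom 1 T) * monom 1 (n - T))"
    by (rule rot_back[symmetric, OF PeA]) (simp add: T_def te_le add.commute)
  then have "Pe = 0" using E0 by (simp add: E_def)
  then have "P1 = P2" by (simp add: Pe_def)
  have "\<forall>i<n. c1 i = c2 i"
  proof (intro allI impI)
    fix i assume "i < n"
    have "coeff P1 i = coeff P2 i" using \<open>P1 = P2\<close> by simp
    then show "c1 i = c2 i" using \<open>i < n\<close> by (simp add: P1_def P2_def coeff_sum_monom_lt)
  qed
  then show ?thesis using c1 c2 by (metis not_le ext)
qed

end


declare Suc_0_mod_eq[simp del]

lemma choose2_Suc: "Suc m choose 2 = m + (m choose 2)"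
  using binomial_Suc_Suc[of m 1] by (simp add: numeral_2_eq_2)

lemma choose2_add: "(x + y) choose 2 = (x choose 2) + (y choose 2) + x * y"
  by (induction y) (simp_all add: choose2_Suc)

lemma hoch_d_zero: "hoch_d n k (\<lambda>_. 0 :: 'a::comm_ring_1 poly) = (\<lambda>_. 0)"
  by (rule ext) (simp add: hoch_d_def)

lemma zero_cochain: "(\<lambda>_. 0) \<in> cochains n k"
  by (simp add: cochains_def)

lemma cohom_refl: "1 \<le> k \<Longrightarrow> cohom n k f (f :: nat list \<Rightarrow> 'a::comm_ring_1 poly)"
  unfolding cohom_def coboundaries_def
  using hoch_d_zero[of n "k - 1", where 'a='a] zero_cochain[of n "k - 1", where 'a='a]
  by (auto simp: image_iff intro!: bexI[of _ "\<lambda>_. 0"])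

context cyc
begin

lemma of_nat_mod_char:
  assumes "of_nat n = (0 :: 'b::comm_ring_1)"
  shows "(of_nat (x mod n) :: 'b) = of_nat x"
proof -
  have "x = x mod n + n * (x div n)" by simp
  then have "(of_nat x :: 'b) = of_nat (x mod n) + of_nat n * of_nat (x div n)"
    by (metis of_nat_add of_nat_mult)
  then show ?thesis using assms by simp
qed

lemma hrep_zero: "hrep k (\<lambda>_. 0) = (\<lambda>_. 0)"
  by (rule ext) (simp add: hrep_def)

lemma cocycle_hrep:
  assumes "\<And>g. g \<in> idx n (Suc k) \<Longrightarrow> gdelta k \<phi> g = 0"
  shows "hrep k \<phi> \<in> cocycles n k"
proof -
  have "hoch_d n k (hrep k \<phi>) = hrep (Suc k) (\<lambda>_. 0)"
    unfolding hoch_d_hrep by (rule hrep_cong) (rule assms)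
  then show ?thesis by (simp add: cocycles_def hrep_cochain hrep_zero)
qed

lemma gx_cocycle: "gx n \<in> (cocycles n 0 :: (nat list \<Rightarrow> 'a::comm_ring_1 poly) set)"
  unfolding gx_hrep by (rule cocycle_hrep) (simp add: gdelta_def)

lemma idx2: "g \<in> idx n 2 \<Longrightarrow> \<exists>a b. g = [a, b] \<and> a < n \<and> b < n"
  by (auto simp: idx_def numeral_2_eq_2 length_Suc_conv)

lemma idx3: "g \<in> idx n 3 \<Longrightarrow> \<exists>a b c. g = [a, b, c] \<and> a < n \<and> b < n \<and> c < n"
  by (auto simp: idx_def numeral_3_eq_3 length_Suc_conv)

lemma gy_cocycle:
  assumes char: "of_nat n = (0 :: 'a::comm_ring_1 poly)"
  shows "gy n \<in> (cocycles n 1 :: (nat list \<Rightarrow> 'a poly) set)"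
  unfolding gy_hrep
proof (rule cocycle_hrep)
  fix g assume "g \<in> idx n (Suc 1)"
  then have "g \<in> idx n 2" by (simp add: numeral_2_eq_2)
  then obtain a b where g: "g = [a, b]" using idx2 by blast
  have "(of_nat ((a + b) mod n) :: 'a poly) = of_nat a + of_nat b"
    using of_nat_mod_char[OF char, of "a + b"] by simp
  then show "gdelta 1 phy g = (0 :: 'a poly)"
    by (simp add: gdelta_def g phy_def merge_def algebra_simps)
qed

lemma gz_cocycle: "gz n \<in> (cocycles n 2 :: (nat list \<Rightarrow> 'a::comm_ring_1 poly) set)"
  unfolding gz_hrep
proof (rule cocycle_hrep)
  fix g assume "g \<in> idx n (Suc 2)"
  then have "g \<in> idx n 3" by (simp add: numeral_3_eq_3)
  then obtain a b c where g: "g = [a, b, c]" and abc: "a < n" "b < n" "c < n"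
    using idx3 by blast
  have "car2 b c - car2 ((a + b) mod n) c + car2 a ((b + c) mod n) - car2 a b = 0"
    using carry_cocycle_uvw[OF abc] by (simp add: car2_def)
  then have "(of_int (car2 b c - car2 ((a + b) mod n) c + car2 a ((b + c) mod n) - car2 a b) :: 'a poly) = 0"
    by simp
  then show "gdelta 2 phz g = (0 :: 'a poly)"
    by (simp add: gdelta_def g phz_def merge_def numeral_2_eq_2 algebra_simps)
qed

lemma xy_comm: "cohom n 1 (cup n 0 1 (gx n) (gy n)) (cup n 1 0 (gy n) (gx n) :: nat list \<Rightarrow> 'a::comm_ring_1 poly)"
proof -
  have "cup n 0 1 (gx n) (gy n) = (cup n 1 0 (gy n) (gx n) :: nat list \<Rightarrow> 'a poly)"
    unfolding gx_hrep gy_hrep cup_hrep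
    by (simp, rule hrep_cong) (auto simp: idx_def mult.commute)
  then show ?thesis by (simp add: cohom_refl)
qed

lemma xz_comm: "cohom n 2 (cup n 0 2 (gx n) (gz n)) (cup n 2 0 (gz n) (gx n) :: nat list \<Rightarrow> 'a::comm_ring_1 poly)"
proof -
  have "cup n 0 2 (gx n) (gz n) = (cup n 2 0 (gz n) (gx n) :: nat list \<Rightarrow> 'a poly)"
    unfolding gx_hrep gz_hrep cup_hrep add_0 add_0_right
    by (rule hrep_cong) (auto simp: idx_def mult.commute)
  then show ?thesis by (simp add: cohom_refl)
qed

lemma xn_one: "cohom n 0 (cpow n 0 (gx n) n) (cone :: nat list \<Rightarrow> 'a::comm_ring_1 poly)"
proof -
  have "cpow n 0 (gx n) n = (cone :: nat list \<Rightarrow> 'a poly)"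
  proof -
    have "red n (monom (1::'a) n) = monom 1 0" by (simp add: red_monom)
    also have "\<dots> = 1" by (simp add: monom_0 one_pCons)
    finally have r: "red n (monom (1::'a) n) = 1" .
    show ?thesis unfolding cpow_gx cone_hrep hrep0 r red_one ..
  qed
  then show ?thesis by (simp add: cohom_def coboundaries_def)
qed

definition phc :: "nat list \<Rightarrow> 'a::comm_ring_1 poly" where
  "phc g = - (of_int (car2 (g ! 0) (g ! 1)) * of_nat ((g ! 0 + g ! 1) mod n)) * monom 1 (n - 1)"

lemma yz_comm:
  assumes char: "of_nat n = (0 :: 'a::comm_ring_1 poly)"
  shows "cohom n 3 (cup n 1 2 (gy n) (gz n)) (cup n 2 1 (gz n) (gy n) :: nat list \<Rightarrow> 'a poly)"
proof -
  define A :: "nat list \<Rightarrow> 'a poly" where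
    "A g = (of_nat (g ! 0) * of_int (car2 (g ! 1) (g ! 2)) - of_int (car2 (g ! 0) (g ! 1)) * of_nat (g ! 2)) * monom 1 (n - 1)" for g
  have e3: "(1::nat) + 2 = 3" "(2::nat) + 1 = 3" by simp_all
  have lhs: "(\<lambda>is. cup n 1 2 (gy n) (gz n) is - cup n 2 1 (gz n) (gy n) is) = hrep 3 A"
    unfolding gy_hrep gz_hrep cup_hrep e3 hrep_diff
  proof (rule hrep_cong)
    fix g assume "g \<in> idx n 3"
    then obtain a b c where g: "g = [a, b, c]" using idx3 by blast
    show "phy (take 1 g) * phz (drop 1 g) - phz (take 2 g) * phy (drop 2 g) = A g"
      by (simp add: g A_def phy_def phz_def numeral_2_eq_2 algebra_simps)
  qed
  have rhs: "hoch_d n 2 (hrep 2 phc) = hrep 3 A"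
    unfolding hoch_d_hrep
  proof (simp add: numeral_3_eq_3[symmetric], rule hrep_cong)
    fix g assume "g \<in> idx n 3"
    then obtain a b c where g: "g = [a, b, c]" and abc: "a < n" "b < n" "c < n" using idx3 by blast
    define Cbc where "Cbc = (of_int (car2 b c) :: 'a poly)"
    define Cab where "Cab = (of_int (car2 a b) :: 'a poly)"
    define C1 where "C1 = (of_int (car2 ((a + b) mod n) c) :: 'a poly)"
    define C2 where "C2 = (of_int (car2 a ((b + c) mod n)) :: 'a poly)"
    have coc: "C2 = Cab - Cbc + C1"
    proof -
      have "car2 b c - car2 ((a + b) mod n) c + car2 a ((b + c) mod n) - car2 a b = 0"
        using carry_cocycle_uvw[OF abc] by (simp add: car2_def)
      then have "car2 a ((b + c) mod n) = car2 a b - car2 b c + car2 ((a + b) mod n) c" by simp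
      then show ?thesis unfolding C1_def C2_def Cab_def Cbc_def by (metis of_int_add of_int_diff)
    qed
    have m1: "(of_nat ((a + b) mod n) :: 'a poly) = of_nat a + of_nat b"
      using of_nat_mod_char[OF char, of "a + b"] by simp
    have m2: "(of_nat ((b + c) mod n) :: 'a poly) = of_nat b + of_nat c"
      using of_nat_mod_char[OF char, of "b + c"] by simp
    have m3: "(of_nat (((a + b) mod n + c) mod n) :: 'a poly) = of_nat a + of_nat b + of_nat c"
      using of_nat_mod_char[OF char, of "(a + b) mod n + c"] m1 by simp
    have m4: "(of_nat ((a + (b + c) mod n) mod n) :: 'a poly) = of_nat a + of_nat b + of_nat c"
      using of_nat_mod_char[OF char, of "a + (b + c) mod n"] m2 by (simp add: add.assoc)
    define \<sigma> where "\<sigma> = (monom 1 (n - 1) :: 'a poly)"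
    have p1: "phc [b, c] = - (Cbc * (of_nat b + of_nat c)) * \<sigma>"
      using m2 by (simp add: phc_def Cbc_def \<sigma>_def)
    have p2: "phc [(a + b) mod n, c] = - (C1 * (of_nat a + of_nat b + of_nat c)) * \<sigma>"
      using m3 by (simp add: phc_def C1_def \<sigma>_def)
    have p3: "phc [a, (b + c) mod n] = - (C2 * (of_nat a + of_nat b + of_nat c)) * \<sigma>"
      using m4 by (simp add: phc_def C2_def \<sigma>_def)
    have p4: "phc [a, b] = - (Cab * (of_nat a + of_nat b)) * \<sigma>"
      using m1 by (simp add: phc_def Cab_def \<sigma>_def)
    have gd: "gdelta 2 phc g = phc [b, c] - phc [(a + b) mod n, c] + phc [a, (b + c) mod n] - phc [a, b]"
      by (simp add: gdelta_def g merge_def numeral_2_eq_2)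
    have Ag: "A g = (of_nat a * Cbc - Cab * of_nat c) * \<sigma>"
      by (simp add: A_def g Cab_def Cbc_def \<sigma>_def)
    show "gdelta 2 phc g = A g"
      unfolding gd p1 p2 p3 p4 Ag coc by (simp add: algebra_simps)
  qed
  show ?thesis
    unfolding cohom_def coboundaries_def lhs rhs[symmetric]
    using hrep_cochain by auto
qed

lemma hrep_shift: "a mod n = b mod n \<Longrightarrow> hrep k (\<lambda>g. X g * monom 1 a) = hrep k (\<lambda>g. X g * monom 1 b)"
proof (rule ext)
  fix g assume ab: "a mod n = b mod n"
  have "red n (X g * monom 1 a * monom 1 (sum_list g)) = red n (X g * monom 1 b * monom 1 (sum_list g))"
    using red_monom_cong[OF ab, of "X g * monom 1 (sum_list g)" 1] by (simp add: ac_simps)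
  then show "hrep k (\<lambda>g. X g * monom 1 a) g = hrep k (\<lambda>g. X g * monom 1 b) g"
    by (simp add: hrep_def)
qed

lemma yy_hrep: "cpow n 1 (gy n) 2 = (hrep 2 (\<lambda>g. of_nat (g ! 0) * of_nat (g ! 1) * monom 1 (n - 2))
          :: nat list \<Rightarrow> 'a::comm_ring_1 poly)"
proof -
  have "cpow n 1 (gy n) 2 = (cup n 1 1 (gy n) (cpow n 1 (gy n) 1) :: nat list \<Rightarrow> 'a poly)"
    by (simp add: numeral_2_eq_2)
  also have "\<dots> = cup n 1 1 (hrep 1 phy) (hrep 1 phy)"
    unfolding cpow_gy1 by (simp only: gy_hrep)
  also have "\<dots> = hrep 2 (\<lambda>g. of_nat (g ! 0) * of_nat (g ! 1) * monom 1 ((n - 1) + (n - 1)))"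
    unfolding cup_hrep one_add_one
  proof (rule hrep_cong)
    fix g :: "nat list" assume "g \<in> idx n 2"
    then obtain a b where g: "g = [a, b]" using idx2 by blast
    show "phy (take 1 g) * phy (drop 1 g) = (of_nat (g ! 0) * of_nat (g ! 1) * monom 1 ((n - 1) + (n - 1)) :: 'a poly)"
      by (simp add: g phy_def mult_monom ac_simps)
  qed
  also have "\<dots> = hrep 2 (\<lambda>g. of_nat (g ! 0) * of_nat (g ! 1) * monom 1 (n - 2))"
  proof (rule hrep_shift)
    have "(n - 1) + (n - 1) = (n - 2) + n" using n2 by simp
    then show "((n - 1) + (n - 1)) mod n = (n - 2) mod n" by simp
  qed
  finally show ?thesis .
qed

definition phf :: "nat list \<Rightarrow> 'a::comm_ring_1 poly" where
  "phf g = - (of_nat (hd g choose 2) * monom 1 (n - 2))"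

lemma choose_mod_identity:
  assumes char: "of_nat n = (0 :: 'b::comm_ring_1)" and ab: "a < n" "b < n"
  shows "(of_nat ((a + b) mod n choose 2) :: 'b) - of_nat (a choose 2) - of_nat (b choose 2)
       = of_nat a * of_nat b - of_int (car2 a b) * of_nat (n choose 2)"
proof (cases "a + b < n")
  case True
  then show ?thesis by (simp add: car2_def choose2_add)
next
  case False
  define s where "s = a + b - n"
  have sab: "a + b = s + n" and smod: "(a + b) mod n = s" using False ab by (simp_all add: s_def mod_2n)
  have "(s choose 2) + (n choose 2) + s * n = (a choose 2) + (b choose 2) + a * b"
    using choose2_add[of s n] choose2_add[of a b] sab by simp
  then have "(of_nat (s choose 2) :: 'b) + of_nat (n choose 2) + of_nat s * of_nat n
      = of_nat (a choose 2) + of_nat (b choose 2) + of_nat a * of_nat b"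
    by (metis of_nat_add of_nat_mult)
  then show ?thesis using False char by (simp add: smod car2_def algebra_simps)
qed

lemma gdelta_phf:
  assumes char: "of_nat n = (0 :: 'a::comm_ring_1 poly)" and g: "g \<in> idx n 2"
  shows "gdelta 1 phf g = (of_nat (g ! 0) * of_nat (g ! 1) - of_int (car2 (g ! 0) (g ! 1)) * of_nat (n choose 2))
            * (monom 1 (n - 2) :: 'a poly)"
proof -
  obtain a b where gab: "g = [a, b]" and ab: "a < n" "b < n" using idx2[OF g] by blast
  have "gdelta 1 phf g = (of_nat ((a + b) mod n choose 2) - of_nat (a choose 2) - of_nat (b choose 2)) * (monom 1 (n - 2) :: 'a poly)"
    by (simp add: gdelta_def gab phf_def merge_def algebra_simps)
  also have "\<dots> = (of_nat a * of_nat b - of_int (car2 a b) * of_nat (n choose 2)) * monom 1 (n - 2)"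
    by (simp only: choose_mod_identity[OF char ab])
  finally show ?thesis by (simp add: gab)
qed

lemma yy_zero:
  assumes char: "of_nat n = (0 :: 'a::comm_ring_1 poly)" and c2: "of_nat (n choose 2) = (0 :: 'a poly)"
  shows "cohom n 2 (cpow n 1 (gy n) 2) (\<lambda>_. 0 :: 'a poly)"
proof -
  have yy': "cpow n 1 (gy n) 2 = (hrep (Suc 1) (\<lambda>g. of_nat (g ! 0) * of_nat (g ! 1) * monom 1 (n - 2))
          :: nat list \<Rightarrow> 'a poly)" by (simp only: Suc_1 yy_hrep)
  have A: "hoch_d n 1 (hrep 1 phf) = (hrep (Suc 1) (\<lambda>g. of_nat (g ! 0) * of_nat (g ! 1) * monom 1 (n - 2))
          :: nat list \<Rightarrow> 'a poly)"
    unfolding hoch_d_hrep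
  proof (rule hrep_cong)
    fix g :: "nat list" assume g: "g \<in> idx n (Suc 1)"
    then have g2: "g \<in> idx n 2" by (simp add: numeral_2_eq_2)
    show "gdelta 1 phf g = (of_nat (g ! 0) * of_nat (g ! 1) * monom 1 (n - 2) :: 'a poly)"
      by (simp only: gdelta_phf[OF char g2] c2) simp
  qed
  have H: "hoch_d n 1 (hrep 1 phf) = (cpow n 1 (gy n) 2 :: nat list \<Rightarrow> 'a poly)" by (simp only: A yy')
  show ?thesis
    unfolding cohom_def coboundaries_def
    using image_eqI[where f="hoch_d n 1", OF H[symmetric] hrep_cochain[of 1 phf]] by simp
qed

lemma yy_rel:
  assumes char: "of_nat n = (0 :: 'a::comm_ring_1 poly)" and c2: "of_nat (n choose 2) = (1 :: 'a poly)"
  shows "cohom n 2 (cpow n 1 (gy n) 2 :: nat list \<Rightarrow> 'a poly) (mono n (n - 2) 0 1)"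
proof -
  have m0: "mono n (n - 2) 0 1 = (hrep (Suc 1) (\<lambda>g. monom 1 (n - 2) * of_int (wI g) * monom 1 (te 0)) :: nat list \<Rightarrow> 'a poly)"
    using mono_hrep[of 0 "n - 2" 1] by simp
  have yy': "cpow n 1 (gy n) 2 = (hrep (Suc 1) (\<lambda>g. of_nat (g ! 0) * of_nat (g ! 1) * monom 1 (n - 2))
          :: nat list \<Rightarrow> 'a poly)" by (simp only: Suc_1 yy_hrep)
  have mono: "mono n (n - 2) 0 1 = (hrep (Suc 1) (\<lambda>g. of_int (car2 (g ! 0) (g ! 1)) * monom 1 (n - 2)) :: nat list \<Rightarrow> 'a poly)"
    unfolding m0
  proof (rule hrep_cong)
    fix g assume g1: "g \<in> idx n (Suc 1)"
    then have g: "g \<in> idx n 2" by (simp add: numeral_2_eq_2)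
    then obtain a b where gab: "g = [a, b]" using idx2 by blast
    show "monom 1 (n - 2) * of_int (wI g) * monom 1 (te 0) = (of_int (car2 (g ! 0) (g ! 1)) * monom 1 (n - 2) :: 'a poly)"
      using wI_even[OF g] by (simp add: gab te_def monom_0 one_pCons[symmetric] mult.commute)
  qed
  have B: "hoch_d n 1 (hrep 1 phf) = hrep (Suc 1) (\<lambda>g. of_nat (g ! 0) * of_nat (g ! 1) * monom 1 (n - 2)
           - of_int (car2 (g ! 0) (g ! 1)) * monom 1 (n - 2) :: 'a poly)"
    unfolding hoch_d_hrep
  proof (rule hrep_cong)
    fix g :: "nat list" assume g1: "g \<in> idx n (Suc 1)"
    then have g: "g \<in> idx n 2" by (simp add: numeral_2_eq_2)
    show "gdelta 1 phf g = (of_nat (g ! 0) * of_nat (g ! 1) * monom 1 (n - 2)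
           - of_int (car2 (g ! 0) (g ! 1)) * monom 1 (n - 2) :: 'a poly)"
      by (simp only: gdelta_phf[OF char g] c2) (simp add: algebra_simps)
  qed
  have C: "(\<lambda>is. cpow n 1 (gy n) 2 is - mono n (n - 2) 0 1 is) = hrep (Suc 1) (\<lambda>g. of_nat (g ! 0) * of_nat (g ! 1) * monom 1 (n - 2)
           - of_int (car2 (g ! 0) (g ! 1)) * monom 1 (n - 2) :: 'a poly)"
    by (simp only: yy' mono hrep_diff)
  have H: "hoch_d n 1 (hrep 1 phf) = (\<lambda>is. (cpow n 1 (gy n) 2 is :: 'a poly) - mono n (n - 2) 0 1 is)"
    by (simp only: B C)
  show ?thesis
    unfolding cohom_def coboundaries_def
    using image_eqI[where f="hoch_d n 1", OF H[symmetric] hrep_cochain[of 1 phf]] by simp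
qed

end


declare Suc_0_mod_eq[simp del]

lemma choose2_double: "2 * (x choose 2) = x * (x - 1)"
proof (induction x)
  case 0 then show ?case by simp
next
  case (Suc m)
  have "2 * (Suc m choose 2) = 2 * m + 2 * (m choose 2)" by (simp add: choose2_Suc)
  also have "\<dots> = 2 * m + m * (m - 1)" using Suc by simp
  also have "\<dots> = Suc m * (Suc m - 1)" by (cases m) (simp_all add: algebra_simps)
  finally show ?case .
qed

lemma of_nat_poly_eq0: "(of_nat k :: 'a::comm_ring_1 poly) = 0 \<longleftrightarrow> (of_nat k :: 'a) = 0"
  by (simp add: of_nat_poly)

lemma c2_zero:
  fixes p m :: nat
  assumes charp: "CHAR('a::comm_ring_1) = p" and pr: "prime p" and cases: "p \<noteq> 2 \<or> even m"
  shows "(of_nat ((m * p) choose 2) :: 'a poly) = 0"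
proof -
  define n where "n = m * p"
  have dbl: "2 * (n choose 2) = n * (n - 1)" by (rule choose2_double)
  have "p dvd n choose 2"
  proof (cases "p = 2")
    case False
    have "p dvd n * (n - 1)" by (simp add: n_def)
    then have "p dvd 2 * (n choose 2)" using dbl by simp
    then have "p dvd 2 \<or> p dvd n choose 2" using pr by (simp add: prime_dvd_mult_iff)
    moreover have "\<not> p dvd 2"
    proof
      assume "p dvd 2"
      then have "p \<le> 2" by (simp add: dvd_imp_le)
      moreover have "p \<ge> 2" using pr by (simp add: prime_ge_2_nat)
      ultimately show False using False by simp
    qed
    ultimately show ?thesis by blast
  next
    case True
    then have "even m" using cases by simp
    then obtain m' where m': "m = 2 * m'" by blast
    have "2 * (n choose 2) = 2 * (2 * m' * (4 * m' - 1))"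
      using dbl by (simp add: n_def m' True algebra_simps)
    then have "n choose 2 = 2 * (m' * (4 * m' - 1))" by simp
    then show ?thesis using True by simp
  qed
  then have "(of_nat (n choose 2) :: 'a) = 0" using charp by (simp add: of_nat_eq_0_iff_char_dvd)
  then show ?thesis by (simp add: of_nat_poly_eq0 n_def)
qed

lemma c2_one:
  fixes p m :: nat
  assumes charp: "CHAR('a::comm_ring_1) = p" and p2: "p = 2" and mo: "odd m"
  shows "(of_nat ((m * p) choose 2) :: 'a poly) = 1"
proof -
  define n where "n = m * p"
  have dbl: "2 * (n choose 2) = n * (n - 1)" by (rule choose2_double)
  have "2 * (n choose 2) = 2 * (m * (2 * m - 1))" using dbl by (simp add: n_def p2 algebra_simps)
  then have c: "n choose 2 = m * (2 * m - 1)" by simp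
  have "odd (2 * m - 1)" using mo by (cases m) simp_all
  then have "odd (n choose 2)" using c mo by simp
  then obtain q where q: "n choose 2 = 2 * q + 1" by (metis oddE)
  have "CHAR('a) dvd 2" using charp p2 by simp
  then have two: "(of_nat 2 :: 'a) = 0" by (simp only: of_nat_eq_0_iff_char_dvd)
  have "(of_nat (n choose 2) :: 'a) = of_nat 2 * of_nat q + 1" by (simp add: q)
  then have "(of_nat (n choose 2) :: 'a) = 1" using two by simp
  then show ?thesis by (simp add: of_nat_poly n_def one_pCons)
qed

theorem mainTheorem13:
  fixes p m n :: nat
  assumes charp: "CHAR('a::comm_ring_1) = p"
    and primep: "prime p"
    and m_pos: "m > 0"
    and n_def: "n = m * p"
  shows
    \<comment> \<open>x, y, z are Hochschild cocycles of degrees 0, 1, 2\<close>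
    "gx n \<in> (cocycles n 0 :: (nat list \<Rightarrow> 'a poly) set)
     \<and> gy n \<in> (cocycles n 1 :: (nat list \<Rightarrow> 'a poly) set)
     \<and> gz n \<in> (cocycles n 2 :: (nat list \<Rightarrow> 'a poly) set)
     \<comment> \<open>the classes x^i y^(d mod 2) z^(d div 2), i < n, form an R-basis of HH^d(A;A)\<close>
     \<and> (\<forall>d. \<forall>f \<in> (cocycles n d :: (nat list \<Rightarrow> 'a poly) set).
           \<exists>!c :: nat \<Rightarrow> 'a. (\<forall>i\<ge>n. c i = 0) \<and>
              cohom n d f (csum {..<n} (\<lambda>i. csmult (c i) (mono n i (d mod 2) (d div 2)))))
     \<comment> \<open>the generators commute in HH^*(A;A)\<close>
     \<and> cohom n 1 (cup n 0 1 (gx n) (gy n)) (cup n 1 0 (gy n) (gx n) :: nat list \<Rightarrow> 'a poly)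
     \<and> cohom n 2 (cup n 0 2 (gx n) (gz n)) (cup n 2 0 (gz n) (gx n) :: nat list \<Rightarrow> 'a poly)
     \<and> cohom n 3 (cup n 1 2 (gy n) (gz n)) (cup n 2 1 (gz n) (gy n) :: nat list \<Rightarrow> 'a poly)
     \<comment> \<open>relation x^n = 1\<close>
     \<and> cohom n 0 (cpow n 0 (gx n) n) (cone :: nat list \<Rightarrow> 'a poly)
     \<comment> \<open>relation for y^2\<close>
     \<and> ((p \<noteq> 2 \<or> even m) \<longrightarrow>
          cohom n 2 (cpow n 1 (gy n) 2) (\<lambda>_. 0 :: 'a poly))
     \<and> ((p = 2 \<and> odd m) \<longrightarrow>
          cohom n 2 (cpow n 1 (gy n) 2 :: nat list \<Rightarrow> 'a poly) (mono n (n - 2) 0 1))"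
proof -
  have p2: "2 \<le> p" using primep by (simp add: prime_ge_2_nat)
  have "1 * 2 \<le> m * p" using m_pos p2 by (intro mult_le_mono) auto
  then have n2: "2 \<le> n" using n_def by simp
  interpret cyc n by (unfold_locales) (rule n2)
  have "CHAR('a) dvd n" using charp n_def by simp
  then have "(of_nat n :: 'a) = 0" by (simp only: of_nat_eq_0_iff_char_dvd)
  then have char: "(of_nat n :: 'a poly) = 0" by (simp add: of_nat_poly)
  have basis: "\<forall>d. \<forall>f \<in> (cocycles n d :: (nat list \<Rightarrow> 'a poly) set).
           \<exists>!c :: nat \<Rightarrow> 'a. (\<forall>i\<ge>n. c i = 0) \<and>
              cohom n d f (csum {..<n} (\<lambda>i. csmult (c i) (mono n i (d mod 2) (d div 2))))"
  proof (intro allI ballI)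
    fix d and f :: "nat list \<Rightarrow> 'a poly" assume f: "f \<in> cocycles n d"
    show "\<exists>!c :: nat \<Rightarrow> 'a. (\<forall>i\<ge>n. c i = 0) \<and>
              cohom n d f (csum {..<n} (\<lambda>i. csmult (c i) (mono n i (d mod 2) (d div 2))))"
    proof -
      obtain c :: "nat \<Rightarrow> 'a" where c: "(\<forall>i\<ge>n. c i = 0) \<and>
              cohom n d f (csum {..<n} (\<lambda>i. csmult (c i) (mono n i (d mod 2) (d div 2))))"
        using basis_exist[OF f] by blast
      show ?thesis
      proof (rule ex1I[of _ c])
        show "(\<forall>i\<ge>n. c i = 0) \<and> cohom n d f (csum {..<n} (\<lambda>i. csmult (c i) (mono n i (d mod 2) (d div 2))))"
          by (rule c)
        fix c' :: "nat \<Rightarrow> 'a"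
        assume c': "(\<forall>i\<ge>n. c' i = 0) \<and> cohom n d f (csum {..<n} (\<lambda>i. csmult (c' i) (mono n i (d mod 2) (d div 2))))"
        show "c' = c" using basis_unique[OF char, of c' d f c] c c' by blast
      qed
    qed
  qed
  show ?thesis
  proof (intro conjI impI)
    show "gx n \<in> (cocycles n 0 :: (nat list \<Rightarrow> 'a poly) set)" by (rule gx_cocycle)
    show "gy n \<in> (cocycles n 1 :: (nat list \<Rightarrow> 'a poly) set)" by (rule gy_cocycle[OF char])
    show "gz n \<in> (cocycles n 2 :: (nat list \<Rightarrow> 'a poly) set)" by (rule gz_cocycle)
    show "\<forall>d. \<forall>f \<in> (cocycles n d :: (nat list \<Rightarrow> 'a poly) set).
           \<exists>!c :: nat \<Rightarrow> 'a. (\<forall>i\<ge>n. c i = 0) \<and>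
              cohom n d f (csum {..<n} (\<lambda>i. csmult (c i) (mono n i (d mod 2) (d div 2))))"
      by (rule basis)
    show "cohom n 1 (cup n 0 1 (gx n) (gy n)) (cup n 1 0 (gy n) (gx n) :: nat list \<Rightarrow> 'a poly)"
      by (rule xy_comm)
    show "cohom n 2 (cup n 0 2 (gx n) (gz n)) (cup n 2 0 (gz n) (gx n) :: nat list \<Rightarrow> 'a poly)"
      by (rule xz_comm)
    show "cohom n 3 (cup n 1 2 (gy n) (gz n)) (cup n 2 1 (gz n) (gy n) :: nat list \<Rightarrow> 'a poly)"
      by (rule yz_comm[OF char])
    show "cohom n 0 (cpow n 0 (gx n) n) (cone :: nat list \<Rightarrow> 'a poly)"
      by (rule xn_one)
    show "cohom n 2 (cpow n 1 (gy n) 2) (\<lambda>_. 0 :: 'a poly)" if "p \<noteq> 2 \<or> even m"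
      using yy_zero[OF char] c2_zero[OF charp primep that] n_def by simp
    show "cohom n 2 (cpow n 1 (gy n) 2 :: nat list \<Rightarrow> 'a poly) (mono n (n - 2) 0 1)" if "p = 2 \<and> odd m"
      using yy_rel[OF char] c2_one[OF charp, of m] that n_def by simp
  qed
qed


end
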